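(* Under the setting of the context, assume that all zeros of $T$ lie in $\mathbb{C}\setminus(\Delta_1\cup\Delta_m)$, that $f$ has exactly $D$ poles in $\mathbb{C}\setminus\Delta_m$, and that $n>N\ge D$. For each $j=0,\ldots,m-1$, $$\int x^\nu Q_{n,j+1}(x)\frac{\mathcal{H}_{n,j+1}(x)\,d\sigma_{j+1}(x)}{Q_{n,j}(x)Q_{n,j+2}(x)}=0,\qquad\nu=0,1,\ldots,n-D-1.$$ Moreover, for $j=0,2,3,\ldots,m-1$, $$\mathcal{H}_{n,j}(z)=\int\frac{Q_{n,j+1}^2(x)}{z-x}\frac{\mathcal{H}_{n,j+1}(x)\,d\sigma_{j+1}(x)}{Q_{n,j}(x)Q_{n,j+2}(x)},$$ and $$\mathcal{H}_{n,1}(z)=T(z)\int\frac{Q_{n,2}^2(x)}{z-x}\frac{\mathcal{H}_{n,2}(x)\,d\sigma_2(x)}{Q_{n,1}(x)Q_{n,3}(x)}.$$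
   Context: Cauchy transform: $\widehat{s}(z)=\int\frac{ds(x)}{z-x}$. For measures $\sigma_\alpha,\sigma_\beta$ on $\mathbb{R}$ with disjoint convex hulls of supports, $d\langle\sigma_\alpha,\sigma_\beta\rangle(x):=\widehat{\sigma}_\beta(x)d\sigma_\alpha(x)$. Setting: $m\ge1$; $\Delta_1,\ldots,\Delta_m$ bounded compact intervals of $\mathbb{R}$ with $\Delta_j\cap\Delta_{j+1}=\emptyset$; $\sigma_j$ a finite Borel measure of constant sign with infinite support whose convex hull is $\Delta_j$. For $1\le j\le k\le m$, $s_{j,k}=\langle\sigma_j,\langle\sigma_{j+1},\ldots,\sigma_k\rangle\rangle$, $s_{k,j}=\langle\sigma_k,\langle\sigma_{k-1},\ldots,\sigma_j\rangle\rangle$ ($s_{j,j}=\sigma_j$). $r_k=v_k/t_k$ rational with real coefficients, $t_k$ monic, $\deg v_k<\deg t_k$, $(v_k,t_k)=1$. $T=\operatorname{lcm}(t_1,\ldots,t_m)$, $D=\deg T$, $f:=\widehat{s}_{m,1}-\sum_{k=1}^{m-1}(-1)^k\widehat{s}_{m,k+1}r_k-(-1)^mr_m$. Multi-level Hermite–Padé polynomials: $a_{n,0},\ldots,a_{n,m}$, not all zero, $\deg a_{n,j}\le n-1$ ($j<m$), $\deg a_{n,m}\le n$, with, as $z\to\infty$, $\mathcal{A}_{n,0}:=a_{n,0}+\sum_{k=1}^m(-1)^ka_{n,k}(\widehat{s}_{1,k}+r_k)=O(z^{-n-1})$, $\mathcal{A}_{n,j}:=(-1)^ja_{n,j}+\sum_{k=j+1}^m(-1)^ka_{n,k}\widehat{s}_{j+1,k}=O(z^{-1})$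 ($1\le j\le m-1$); $\mathcal{A}_{n,m}:=(-1)^ma_{n,m}$. Under the stated assumptions on $T$ and $f$ it is known that there is $N\ge D$ such that for $n>N$: $\deg a_{n,m}=n$, the solution is unique up to a constant factor and normalized with $a_{n,m}$ monic; $a_{n,m}$ has exactly $n-D$ simple zeros on $\Delta_m$; for $1\le j\le m-1$, $\mathcal{A}_{n,j}$ has exactly $n-D$ zeros in $\mathbb{C}\setminus\Delta_{j+1}$, simple and in $\Delta_j$. $Q_{n,j}$ ($1\le j\le m$) is the monic polynomial of degree $n-D$ whose zeros are the zeros of $\mathcal{A}_{n,j}$ on $\Delta_j$; by convention $Q_{n,0}\equiv Q_{n,m+1}\equiv1$. $\mathcal{H}_{n,j}=Q_{n,j+1}T\mathcal{A}_{n,j}/Q_{n,j}$ for $j=0,1$ and $\mathcal{H}_{n,j}=Q_{n,j+1}\mathcal{A}_{n,j}/Q_{n,j}$ for $j=2,\ldots,m$. *)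

theory Defs
  imports "HOL-Complex_Analysis.Complex_Analysis" "HOL-Probability.Probability"
    "HOL-Computational_Algebra.Computational_Algebra" "HOL-Computational_Algebra.Field_as_Ring" "HOL-Library.Landau_Symbols"
begin

definition msupp :: "real measure \<Rightarrow> real set" where
  "msupp M = {x. \<forall>e>0. 0 < emeasure M (ball x e)}"

text \<open>A measure of constant sign is represented as sign c j (1 or -1) times the
  positive measure sigma j; this is integration against the signed measure.\<close>
definition sint :: "(nat \<Rightarrow> real measure) \<Rightarrow> (nat \<Rightarrow> real) \<Rightarrow> nat \<Rightarrow> (real \<Rightarrow> complex) \<Rightarrow> complex" where
  "sint \<sigma> c j g = complex_of_real (c j) * (\<integral>x. g x \<partial>(\<sigma> j))"

text \<open>Cauchy transform of the Nikishin measure s_{j,k} (both for j \<le> k and j > k).\<close>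
function shat :: "(nat \<Rightarrow> real measure) \<Rightarrow> (nat \<Rightarrow> real) \<Rightarrow> nat \<Rightarrow> nat \<Rightarrow> complex \<Rightarrow> complex" where
  "shat \<sigma> c j k z =
    (if j = k then sint \<sigma> c j (\<lambda>x. 1 / (z - complex_of_real x))
     else if j < k then sint \<sigma> c j (\<lambda>x. shat \<sigma> c (Suc j) k (complex_of_real x) / (z - complex_of_real x))
     else sint \<sigma> c j (\<lambda>x. shat \<sigma> c (j - 1) k (complex_of_real x) / (z - complex_of_real x)))"
  by pat_completeness auto
termination
  by (relation "Wellfounded.measure (\<lambda>(\<sigma>, c, j, k, z). if j \<le> k then k - j else j - k)") auto

definition pc :: "real poly \<Rightarrow> complex \<Rightarrow> complex" where
  "pc p z = poly (map_poly complex_of_real p) z"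

definition ratf :: "real poly \<Rightarrow> real poly \<Rightarrow> complex \<Rightarrow> complex" where
  "ratf v t z = pc v z / pc t z"

definition bigT :: "(nat \<Rightarrow> real poly) \<Rightarrow> nat \<Rightarrow> real poly" where
  "bigT t m = Lcm (t ` {1..m})"

definition ffun :: "(nat \<Rightarrow> real measure) \<Rightarrow> (nat \<Rightarrow> real) \<Rightarrow> (nat \<Rightarrow> real poly) \<Rightarrow> (nat \<Rightarrow> real poly)
    \<Rightarrow> nat \<Rightarrow> complex \<Rightarrow> complex" where
  "ffun \<sigma> c v t m z = shat \<sigma> c m 1 z
     - (\<Sum>k=1..m-1. (-1)^k * shat \<sigma> c m (k+1) z * ratf (v k) (t k) z)
     - (-1)^m * ratf (v m) (t m) z"

definition HPA :: "(nat \<Rightarrow> real measure) \<Rightarrow> (nat \<Rightarrow> real) \<Rightarrow> (nat \<Rightarrow> real poly) \<Rightarrow> (nat \<Rightarrow> real poly)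
    \<Rightarrow> nat \<Rightarrow> (nat \<Rightarrow> real poly) \<Rightarrow> nat \<Rightarrow> complex \<Rightarrow> complex" where
  "HPA \<sigma> c v t m a j z =
    (if j = 0 then pc (a 0) z
        + (\<Sum>k=1..m. (-1)^k * pc (a k) z * (shat \<sigma> c 1 k z + ratf (v k) (t k) z))
     else if j < m then (-1)^j * pc (a j) z
        + (\<Sum>k=Suc j..m. (-1)^k * pc (a k) z * shat \<sigma> c (Suc j) k z)
     else (-1)^m * pc (a m) z)"

definition HP_sol :: "(nat \<Rightarrow> real measure) \<Rightarrow> (nat \<Rightarrow> real) \<Rightarrow> (nat \<Rightarrow> real poly) \<Rightarrow> (nat \<Rightarrow> real poly)
    \<Rightarrow> nat \<Rightarrow> nat \<Rightarrow> (nat \<Rightarrow> real poly) \<Rightarrow> bool" where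
  "HP_sol \<sigma> c v t m n a \<longleftrightarrow>
     (\<exists>j\<le>m. a j \<noteq> 0) \<and>
     (\<forall>j<m. degree (a j) \<le> n - 1) \<and> degree (a m) \<le> n \<and>
     HPA \<sigma> c v t m a 0 \<in> O[at_infinity](\<lambda>z. 1 / z ^ (n + 1)) \<and>
     (\<forall>j. 1 \<le> j \<and> j \<le> m - 1 \<longrightarrow> HPA \<sigma> c v t m a j \<in> O[at_infinity](\<lambda>z. 1 / z))"

text \<open>The zero properties known for large n (Delta j are the intervals, D = deg T).\<close>
definition HP_zero_props :: "(nat \<Rightarrow> real measure) \<Rightarrow> (nat \<Rightarrow> real) \<Rightarrow> (nat \<Rightarrow> real poly) \<Rightarrow> (nat \<Rightarrow> real poly)
    \<Rightarrow> nat \<Rightarrow> (nat \<Rightarrow> real set) \<Rightarrow> nat \<Rightarrow> (nat \<Rightarrow> real poly) \<Rightarrow> bool" where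
  "HP_zero_props \<sigma> c v t m \<Delta> n a \<longleftrightarrow>
     (let D = degree (bigT t m) in
       finite {x \<in> \<Delta> m. poly (a m) x = 0} \<and>
       card {x \<in> \<Delta> m. poly (a m) x = 0} = n - D \<and>
       (\<forall>x \<in> \<Delta> m. poly (a m) x = 0 \<longrightarrow> order x (a m) = 1) \<and>
       (\<forall>j. 1 \<le> j \<and> j \<le> m - 1 \<longrightarrow>
          (let Z = {z. z \<notin> complex_of_real ` \<Delta> (Suc j) \<and> HPA \<sigma> c v t m a j z = 0} in
            finite Z \<and> card Z = n - D \<and> Z \<subseteq> complex_of_real ` \<Delta> j \<and>
            (\<forall>z\<in>Z. deriv (HPA \<sigma> c v t m a j) z \<noteq> 0))))"

definition HPQ :: "(nat \<Rightarrow> real measure) \<Rightarrow> (nat \<Rightarrow> real) \<Rightarrow> (nat \<Rightarrow> real poly) \<Rightarrow> (nat \<Rightarrow> real poly)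
    \<Rightarrow> nat \<Rightarrow> (nat \<Rightarrow> real set) \<Rightarrow> (nat \<Rightarrow> real poly) \<Rightarrow> nat \<Rightarrow> complex \<Rightarrow> complex" where
  "HPQ \<sigma> c v t m \<Delta> a j z =
    (if 1 \<le> j \<and> j \<le> m then
       (\<Prod>x\<in>{x \<in> \<Delta> j. HPA \<sigma> c v t m a j (complex_of_real x) = 0}. z - complex_of_real x)
     else 1)"

definition HPH :: "(nat \<Rightarrow> real measure) \<Rightarrow> (nat \<Rightarrow> real) \<Rightarrow> (nat \<Rightarrow> real poly) \<Rightarrow> (nat \<Rightarrow> real poly)
    \<Rightarrow> nat \<Rightarrow> (nat \<Rightarrow> real set) \<Rightarrow> (nat \<Rightarrow> real poly) \<Rightarrow> nat \<Rightarrow> complex \<Rightarrow> complex" where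
  "HPH \<sigma> c v t m \<Delta> a j z =
    (if j \<le> 1 then HPQ \<sigma> c v t m \<Delta> a (Suc j) z * pc (bigT t m) z * HPA \<sigma> c v t m a j z
                    / HPQ \<sigma> c v t m \<Delta> a j z
     else HPQ \<sigma> c v t m \<Delta> a (Suc j) z * HPA \<sigma> c v t m a j z / HPQ \<sigma> c v t m \<Delta> a j z)"

end

theory Submission
  imports Defs "HOL-Real_Asymp.Real_Asymp"
begin


definition good :: "real set \<Rightarrow> (real \<Rightarrow> complex) \<Rightarrow> bool" where
  "good S h \<longleftrightarrow> h \<in> borel_measurable borel \<and> (\<exists>B. \<forall>x\<in>S. norm (h x) \<le> B)"

lemma cont_bounded:
  assumes "compact S" "continuous_on S h"
  shows "\<exists>B. \<forall>x\<in>S. norm (h x) \<le> (B::real)"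
proof -
  have "compact (h ` S)" using assms compact_continuous_image by blast
  then have "bounded (h ` S)" by (rule compact_imp_bounded)
  then show ?thesis unfolding bounded_iff by auto
qed

lemma good_cont: "h \<in> borel_measurable borel \<Longrightarrow> continuous_on S h \<Longrightarrow> compact S \<Longrightarrow> good S h"
  unfolding good_def using cont_bounded by blast

lemma good_mult:
  assumes "good S f" "good S g" shows "good S (\<lambda>x. f x * g x)"
proof -
  obtain A B where A: "\<forall>x\<in>S. norm (f x) \<le> A" and B: "\<forall>x\<in>S. norm (g x) \<le> B"
    and m: "f \<in> borel_measurable borel" "g \<in> borel_measurable borel"
    using assms unfolding good_def by blast
  have "\<forall>x\<in>S. norm (f x * g x) \<le> max 0 A * max 0 B"
  proof
    fix x assume "x \<in> S"
    then have "norm (f x) \<le> max 0 A" "norm (g x) \<le> max 0 B" using A B by force+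
    then show "norm (f x * g x) \<le> max 0 A * max 0 B"
      by (simp add: norm_mult mult_mono)
  qed
  then show ?thesis unfolding good_def using m by auto
qed

lemma good_add:
  assumes "good S f" "good S g" shows "good S (\<lambda>x. f x + g x)"
proof -
  obtain A B where A: "\<forall>x\<in>S. norm (f x) \<le> A" and B: "\<forall>x\<in>S. norm (g x) \<le> B"
    and m: "f \<in> borel_measurable borel" "g \<in> borel_measurable borel"
    using assms unfolding good_def by blast
  have "\<forall>x\<in>S. norm (f x + g x) \<le> A + B"
    using A B by (smt (verit) norm_triangle_ineq)
  then show ?thesis unfolding good_def using m by auto
qed

lemma good_const: "good S (\<lambda>x. c)"
  unfolding good_def by auto

lemma good_cmult: "good S f \<Longrightarrow> good S (\<lambda>x. c * f x)"
  using good_mult[OF good_const] by blast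

lemma good_sum:
  assumes "finite I" "\<And>i. i \<in> I \<Longrightarrow> good S (f i)"
  shows "good S (\<lambda>x. \<Sum>i\<in>I. f i x)"
  using assms
proof (induction I rule: finite_induct)
  case empty then show ?case by (simp add: good_const)
next
  case (insert i I)
  then show ?case by (simp add: good_add)
qed

lemma cont_poly: "continuous_on A (\<lambda>x::real. poly p (complex_of_real x))"
  by (intro continuous_intros)

lemma good_poly: "compact S \<Longrightarrow> good S (\<lambda>x. poly p (complex_of_real x))"
  by (intro good_cont borel_measurable_continuous_onI cont_poly)

lemma good_pc: "compact S \<Longrightarrow> good S (\<lambda>x. pc p (complex_of_real x))"
  unfolding pc_def by (rule good_poly)

lemma good_ofreal_pow: "compact S \<Longrightarrow> good S (\<lambda>x. complex_of_real x ^ k)"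
  by (intro good_cont borel_measurable_continuous_onI continuous_intros)

lemma good_inv:
  assumes "compact S" "continuous_on UNIV q" "\<forall>x\<in>S. q x \<noteq> (0::complex)"
  shows "good S (\<lambda>x. 1 / q x)"
proof (rule good_cont)
  show "(\<lambda>x. 1 / q x) \<in> borel_measurable borel"
    using borel_measurable_continuous_onI[OF assms(2)] by measurable
  show "continuous_on S (\<lambda>x. 1 / q x)"
    using assms by (intro continuous_intros) (auto intro: continuous_on_subset)
qed (use assms in auto)

lemma good_inv_dist:
  assumes "compact S" "z \<notin> complex_of_real ` S"
  shows "good S (\<lambda>x. 1 / (z - complex_of_real x))"
  using assms by (intro good_inv continuous_intros) auto




definition PhiG :: "real measure \<Rightarrow> (real \<Rightarrow> complex) \<Rightarrow> complex \<Rightarrow> complex" where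
  "PhiG M h z = (\<integral>x. h x / (z - complex_of_real x) \<partial>M)"

definition momG :: "real measure \<Rightarrow> (real \<Rightarrow> complex) \<Rightarrow> nat \<Rightarrow> complex" where
  "momG M h k = integral\<^sup>L M (\<lambda>x. complex_of_real x ^ k * h x)"

locale smeas =
  fixes M :: "real measure" and S :: "real set"
  assumes sets_M: "sets M = sets borel" and fin: "finite_measure M" and cpt: "compact S"
    and ae: "AE x in M. x \<in> S"
begin

abbreviation Phi :: "(real \<Rightarrow> complex) \<Rightarrow> complex \<Rightarrow> complex" where
  "Phi \<equiv> PhiG M"

lemma meas_M: "h \<in> borel_measurable borel \<Longrightarrow> h \<in> borel_measurable M"
  by (metis measurable_cong_sets[OF sets_M refl])

lemma integ: "good S h \<Longrightarrow> integrable M h"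
proof -
  assume "good S h"
  then obtain B where m: "h \<in> borel_measurable borel" and B: "\<forall>x\<in>S. norm (h x) \<le> B"
    unfolding good_def by blast
  have "AE x in M. norm (h x) \<le> B" using ae by eventually_elim (use B in auto)
  then show ?thesis using finite_measure.integrable_const_bound[OF fin] meas_M[OF m] by blast
qed

lemma good_div0: "good S h \<Longrightarrow> z \<notin> complex_of_real ` S \<Longrightarrow> good S (\<lambda>x. h x / (z - complex_of_real x))"
proof -
  assume a: "good S h" "z \<notin> complex_of_real ` S"
  have "good S (\<lambda>x. h x * (1 / (z - complex_of_real x)))" by (rule good_mult[OF a(1) good_inv_dist[OF cpt a(2)]])
  then show ?thesis by simp
qed

lemma good_div: "good S h \<Longrightarrow> z \<notin> complex_of_real ` S \<Longrightarrow> good S (\<lambda>x. h x / (z - complex_of_real x))"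
  by (rule good_div0)

lemma integ_div: "good S h \<Longrightarrow> z \<notin> complex_of_real ` S \<Longrightarrow> integrable M (\<lambda>x. h x / (z - complex_of_real x))"
  by (intro integ good_div)

lemma int_cong:
  assumes "h \<in> borel_measurable borel" "g \<in> borel_measurable borel" "\<And>x. x \<in> S \<Longrightarrow> h x = g x"
  shows "integral\<^sup>L M h = integral\<^sup>L M g"
  using assms(3) by (intro integral_cong_AE meas_M assms(1,2)) (use ae in \<open>eventually_elim, auto\<close>)

lemma Phi_cong:
  assumes "h \<in> borel_measurable borel" "g \<in> borel_measurable borel" "\<And>x. x \<in> S \<Longrightarrow> h x = g x"
  shows "Phi h z = Phi g z"
  unfolding PhiG_def using assms by (intro int_cong) auto

lemma Phi_add:
  assumes "good S h" "good S g" "z \<notin> complex_of_real ` S"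
  shows "Phi (\<lambda>x. h x + g x) z = Phi h z + Phi g z"
  unfolding PhiG_def add_divide_distrib using assms by (simp add: integ_div)

lemma Phi_diff:
  assumes "good S h" "good S g" "z \<notin> complex_of_real ` S"
  shows "Phi (\<lambda>x. h x - g x) z = Phi h z - Phi g z"
  unfolding PhiG_def diff_divide_distrib using assms by (simp add: integ_div)

lemma Phi_sum:
  assumes "finite I" "\<And>i. i \<in> I \<Longrightarrow> good S (h i)" "z \<notin> complex_of_real ` S"
  shows "Phi (\<lambda>x. \<Sum>i\<in>I. h i x) z = (\<Sum>i\<in>I. Phi (h i) z)"
  unfolding PhiG_def sum_divide_distrib by (rule Bochner_Integration.integral_sum) (use assms in \<open>auto simp: integ_div\<close>)

lemma Phi_cmult: "Phi (\<lambda>x. a * h x) z = a * Phi h z"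
  unfolding PhiG_def using integral_mult_right_zero[where c=a and f="\<lambda>x. h x / (z - complex_of_real x)" and M=M] by simp

lemma zPhi:
  assumes "good S h" "z \<notin> complex_of_real ` S"
  shows "z * Phi h z = integral\<^sup>L M h + Phi (\<lambda>x. complex_of_real x * h x) z"
proof -
  have "z * Phi h z = (\<integral>x. z * (h x / (z - complex_of_real x)) \<partial>M)"
    unfolding PhiG_def by (rule integral_mult_right_zero[symmetric])
  also have "\<dots> = (\<integral>x. h x + complex_of_real x * h x / (z - complex_of_real x) \<partial>M)"
  proof (rule int_cong)
    show "(\<lambda>x. z * (h x / (z - complex_of_real x))) \<in> borel_measurable borel"
      using good_div[OF assms] good_cmult unfolding good_def by blast
    show "(\<lambda>x. h x + complex_of_real x * h x / (z - complex_of_real x)) \<in> borel_measurable borel"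
      using good_add[OF assms(1) good_div[OF good_mult[OF good_ofreal_pow[OF cpt, of 1] assms(1)] assms(2)]]
      unfolding good_def by simp
    fix x assume "x \<in> S"
    then have "z - complex_of_real x \<noteq> 0" using assms(2) by auto
    then show "z * (h x / (z - complex_of_real x)) = h x + complex_of_real x * h x / (z - complex_of_real x)"
      by (simp add: field_simps)
  qed
  also have "\<dots> = integral\<^sup>L M h + Phi (\<lambda>x. complex_of_real x * h x) z"
    unfolding PhiG_def
    using assms good_div[OF good_mult[OF good_ofreal_pow[OF cpt, of 1] assms(1)] assms(2)]
    by (intro Bochner_Integration.integral_add integ) auto
  finally show ?thesis .
qed

lemma int_bound:
  fixes h :: "real \<Rightarrow> complex"
  assumes "h \<in> borel_measurable borel" "\<And>x. x \<in> S \<Longrightarrow> norm (h x) \<le> B"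
  shows "norm (integral\<^sup>L M h) \<le> B * measure M (space M)"
proof -
  have "good S h" unfolding good_def using assms by blast
  then have i: "integrable M h" by (rule integ)
  have "norm (integral\<^sup>L M h) \<le> (\<integral>x. norm (h x) \<partial>M)" by (rule integral_norm_bound)
  also have "\<dots> \<le> (\<integral>x. B \<partial>M)"
    using ae assms(2) by (intro integral_mono_AE integrable_norm i finite_measure.integrable_const fin)
       (auto elim: eventually_mono)
  also have "\<dots> = B * measure M (space M)"
    by simp
  finally show ?thesis .
qed

lemma Phi_meas:
  assumes "g \<in> borel_measurable borel"
  shows "(\<lambda>x::real. Phi g (complex_of_real x)) \<in> borel_measurable borel"
proof -
  interpret finite_measure M by (rule fin)
  have "(\<lambda>(x,y). g y / (complex_of_real x - complex_of_real y)) \<in> borel_measurable (borel \<Otimes>\<^sub>M borel)"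
    using assms by measurable
  then have "(\<lambda>(x,y). g y / (complex_of_real x - complex_of_real y)) \<in> borel_measurable (borel \<Otimes>\<^sub>M M)"
    by (metis measurable_cong_sets[OF sets_pair_measure_cong[OF refl sets_M] refl])
  then show ?thesis unfolding PhiG_def
    by (rule borel_measurable_lebesgue_integral[of "\<lambda>x y. g y / (complex_of_real x - complex_of_real y)", simplified])
qed


abbreviation mom :: "(real \<Rightarrow> complex) \<Rightarrow> nat \<Rightarrow> complex" where
  "mom \<equiv> momG M"

lemma good_xpow: "good S h \<Longrightarrow> good S (\<lambda>x. complex_of_real x ^ k * h x)"
  by (rule good_mult[OF good_ofreal_pow[OF cpt]])

lemma Phi_bound:
  fixes h :: "real \<Rightarrow> complex"
  assumes "h \<in> borel_measurable borel" "\<And>x. x \<in> S \<Longrightarrow> norm (h x) \<le> B"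
    and "d > 0" "\<And>x. x \<in> S \<Longrightarrow> d \<le> norm (z - complex_of_real x)"
  shows "norm (Phi h z) \<le> B / d * measure M (space M)"
proof -
  have gh: "good S h" unfolding good_def using assms by blast
  have zS: "z \<notin> complex_of_real ` S" using assms(3,4) by force
  have "(\<lambda>x. h x / (z - complex_of_real x)) \<in> borel_measurable borel"
    using good_div[OF gh zS] unfolding good_def by blast
  moreover have "norm (h x / (z - complex_of_real x)) \<le> B / d" if "x \<in> S" for x
  proof -
    have "norm (h x / (z - complex_of_real x)) = norm (h x) / norm (z - complex_of_real x)"
      by (simp add: norm_divide)
    also have "\<dots> \<le> B / d"
      using assms(2)[OF that] assms(3) assms(4)[OF that] by (meson frac_le norm_ge_zero order.trans)
    finally show ?thesis .
  qed
  ultimately show ?thesis unfolding PhiG_def by (rule int_bound)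
qed

lemma zpow:
  assumes "good S h" "z \<notin> complex_of_real ` S"
  shows "z ^ i * Phi h z = (\<Sum>\<nu><i. z ^ (i - 1 - \<nu>) * mom h \<nu>) + Phi (\<lambda>x. complex_of_real x ^ i * h x) z"
proof (induction i)
  case 0
  then show ?case by simp
next
  case (Suc i)
  have "z ^ Suc i * Phi h z = z * (z ^ i * Phi h z)" by simp
  also have "\<dots> = (\<Sum>\<nu><i. z * z ^ (i - 1 - \<nu>) * mom h \<nu>) + z * Phi (\<lambda>x. complex_of_real x ^ i * h x) z"
    unfolding Suc by (simp add: algebra_simps sum_distrib_left)
  also have "z * Phi (\<lambda>x. complex_of_real x ^ i * h x) z = mom h i + Phi (\<lambda>x. complex_of_real x ^ Suc i * h x) z"
    unfolding zPhi[OF good_xpow[OF assms(1)] assms(2)] momG_def by (simp add: mult.assoc)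
  also have "(\<Sum>\<nu><i. z * z ^ (i - 1 - \<nu>) * mom h \<nu>) = (\<Sum>\<nu><i. z ^ (Suc i - 1 - \<nu>) * mom h \<nu>)"
  proof (rule sum.cong)
    fix \<nu> assume "\<nu> \<in> {..<i}"
    then have "Suc i - 1 - \<nu> = Suc (i - 1 - \<nu>)" by auto
    then show "z * z ^ (i - 1 - \<nu>) * mom h \<nu> = z ^ (Suc i - 1 - \<nu>) * mom h \<nu>" by simp
  qed simp
  finally show ?case by (simp add: algebra_simps)
qed

lemma polypart:
  assumes "good S h"
  shows "\<exists>U. \<forall>z. z \<notin> complex_of_real ` S \<longrightarrow>
     poly u z * Phi h z = Phi (\<lambda>x. poly u (complex_of_real x) * h x) z + poly U z"
proof (induction u)
  case 0
  then show ?case by (intro exI[of _ 0]) (simp add: PhiG_def)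
next
  case (pCons a u)
  then obtain U where U: "\<And>z. z \<notin> complex_of_real ` S \<Longrightarrow>
     poly u z * Phi h z = Phi (\<lambda>x. poly u (complex_of_real x) * h x) z + poly U z" by blast
  have gu: "good S (\<lambda>x. poly u (complex_of_real x) * h x)"
    by (rule good_mult[OF good_poly[OF cpt] assms])
  show ?case
  proof (intro exI[of _ "pCons (integral\<^sup>L M (\<lambda>x. poly u (complex_of_real x) * h x)) U"] allI impI)
    fix z assume z: "z \<notin> complex_of_real ` S"
    have "poly (pCons a u) z * Phi h z = a * Phi h z + z * (poly u z * Phi h z)"
      by (simp add: algebra_simps)
    also have "\<dots> = a * Phi h z + z * Phi (\<lambda>x. poly u (complex_of_real x) * h x) z + z * poly U z"
      using U[OF z] by (simp add: algebra_simps)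
    also have "z * Phi (\<lambda>x. poly u (complex_of_real x) * h x) z
       = integral\<^sup>L M (\<lambda>x. poly u (complex_of_real x) * h x)
         + Phi (\<lambda>x. complex_of_real x * (poly u (complex_of_real x) * h x)) z"
      by (rule zPhi[OF gu z])
    also have "a * Phi h z = Phi (\<lambda>x. a * h x) z" by (simp add: Phi_cmult)
    also have "Phi (\<lambda>x. a * h x) z + (integral\<^sup>L M (\<lambda>x. poly u (complex_of_real x) * h x)
         + Phi (\<lambda>x. complex_of_real x * (poly u (complex_of_real x) * h x)) z) + z * poly U z
       = Phi (\<lambda>x. a * h x + complex_of_real x * (poly u (complex_of_real x) * h x)) z
         + (integral\<^sup>L M (\<lambda>x. poly u (complex_of_real x) * h x) + z * poly U z)"
      using Phi_add[OF good_cmult[OF assms] good_mult[OF good_ofreal_pow[OF cpt, of 1] gu] z] by simp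
    also have "(\<lambda>x. a * h x + complex_of_real x * (poly u (complex_of_real x) * h x))
       = (\<lambda>x. poly (pCons a u) (complex_of_real x) * h x)"
      by (simp add: algebra_simps)
    finally show "poly (pCons a u) z * Phi h z = Phi (\<lambda>x. poly (pCons a u) (complex_of_real x) * h x) z
       + poly (pCons (integral\<^sup>L M (\<lambda>x. poly u (complex_of_real x) * h x)) U) z" by simp
  qed
qed

lemma orth_mult:
  assumes "good S h" "z \<notin> complex_of_real ` S" "\<And>\<nu>. \<nu> < r \<Longrightarrow> mom h \<nu> = 0" "degree u \<le> r"
  shows "poly u z * Phi h z = Phi (\<lambda>x. poly u (complex_of_real x) * h x) z"
proof -
  have pw: "z ^ i * Phi h z = Phi (\<lambda>x. complex_of_real x ^ i * h x) z" if "i \<le> r" for i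
    using zpow[OF assms(1,2), of i] that assms(3) by simp
  have "poly u z * Phi h z = (\<Sum>i\<le>degree u. coeff u i * (z ^ i * Phi h z))"
    by (simp add: poly_altdef sum_distrib_left sum_distrib_right mult_ac)
  also have "\<dots> = (\<Sum>i\<le>degree u. Phi (\<lambda>x. coeff u i * (complex_of_real x ^ i * h x)) z)"
    using pw assms(4) by (intro sum.cong) (auto simp: Phi_cmult)
  also have "\<dots> = Phi (\<lambda>x. \<Sum>i\<le>degree u. coeff u i * (complex_of_real x ^ i * h x)) z"
    by (rule Phi_sum[symmetric]) (auto intro!: good_cmult good_xpow assms(1,2))
  also have "(\<lambda>x. \<Sum>i\<le>degree u. coeff u i * (complex_of_real x ^ i * h x))
      = (\<lambda>x. poly u (complex_of_real x) * h x)"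
    by (simp add: poly_altdef sum_distrib_left sum_distrib_right mult_ac)
  finally show ?thesis .
qed


lemma mom_vanish:
  assumes gh: "good S h" and bd: "\<And>z::real. R0 \<le> z \<Longrightarrow> norm (Phi h (complex_of_real z)) \<le> C / z ^ Suc r"
  shows "\<And>\<nu>. \<nu> < r \<Longrightarrow> mom h \<nu> = 0"
proof -
  obtain R where R: "\<forall>x\<in>S. norm x \<le> R" using compact_imp_bounded[OF cpt] unfolding bounded_iff by blast
  define R1 where "R1 = max R 0"
  have R1: "\<And>x. x \<in> S \<Longrightarrow> abs x \<le> R1" "R1 \<ge> 0" using R unfolding R1_def by force+
  define C' where "C' = max C 0"
  define \<mu> where "\<mu> = measure M (space M)"
  have "\<mu> \<ge> 0" unfolding \<mu>_def by simp
  have step: "mom h k = 0" if k: "k < r" and IH: "\<And>\<nu>. \<nu> < k \<Longrightarrow> mom h \<nu> = 0" for k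
  proof -
    define g where "g = (\<lambda>x. complex_of_real x ^ Suc k * h x)"
    have gg: "good S g" unfolding g_def by (rule good_xpow[OF gh])
    then obtain Bg0 where gm: "g \<in> borel_measurable borel" and Bg0: "\<forall>x\<in>S. norm (g x) \<le> Bg0"
      unfolding good_def by blast
    define Bg where "Bg = max Bg0 0"
    have Bg: "\<And>x. x \<in> S \<Longrightarrow> norm (g x) \<le> Bg" "Bg \<ge> 0" using Bg0 unfolding Bg_def by force+
    have ev: "norm (mom h k) \<le> C' / z + Bg / (z - R1) * \<mu>"
      if z: "z \<ge> max R0 (R1 + 1)" for z :: real
    proof -
      have z1: "z \<ge> 1" "z > R1" "z \<ge> R0" using z R1(2) by auto
      have zS: "complex_of_real z \<notin> complex_of_real ` S" using R1(1) z1 by force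
      have "complex_of_real z ^ Suc k * Phi h (complex_of_real z)
         = (\<Sum>\<nu><Suc k. complex_of_real z ^ (Suc k - 1 - \<nu>) * mom h \<nu>) + Phi g (complex_of_real z)"
        unfolding g_def by (rule zpow[OF gh zS])
      also have "(\<Sum>\<nu><Suc k. complex_of_real z ^ (Suc k - 1 - \<nu>) * mom h \<nu>) = mom h k"
        using IH by simp
      finally have eq: "mom h k = complex_of_real z ^ Suc k * Phi h (complex_of_real z) - Phi g (complex_of_real z)"
        by simp
      have b1: "norm (complex_of_real z ^ Suc k * Phi h (complex_of_real z)) \<le> C' / z"
      proof -
        have "norm (Phi h (complex_of_real z)) \<le> C' / z ^ Suc r"
          using bd[OF z1(3)] unfolding C'_def
          by (smt (verit, best) divide_right_mono zero_le_power z1(1))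
        moreover have "norm (complex_of_real z ^ Suc k * Phi h (complex_of_real z)) = z ^ Suc k * norm (Phi h (complex_of_real z))"
          using z1 by (simp add: norm_mult norm_power)
        ultimately have "norm (complex_of_real z ^ Suc k * Phi h (complex_of_real z)) \<le> z ^ Suc k * (C' / z ^ Suc r)"
          using z1 by (metis mult_left_mono zero_le_power order.trans zero_le_one)
        also have "z ^ Suc k * (C' / z ^ Suc r) = C' * (z ^ Suc k / z ^ Suc r)" by simp
        also have "z ^ Suc k / z ^ Suc r = 1 / z ^ (r - k)"
          using z1 k by (simp add: power_diff)
        also have "C' * (1 / z ^ (r - k)) \<le> C' * (1 / z)"
        proof -
          have "z ^ 1 \<le> z ^ (r - k)" using z1 k by (intro power_increasing) auto
          then have "1 / z ^ (r - k) \<le> 1 / z" using z1 by (intro divide_left_mono) auto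
          then show ?thesis unfolding C'_def by (intro mult_left_mono) auto
        qed
        finally show ?thesis by simp
      qed
      have b2: "norm (Phi g (complex_of_real z)) \<le> Bg / (z - R1) * \<mu>"
        unfolding \<mu>_def
      proof (rule Phi_bound[OF gm Bg(1)])
        show "0 < z - R1" using z1 by simp
        fix x assume "x \<in> S"
        then have "abs x \<le> R1" by (rule R1(1))
        then show "z - R1 \<le> norm (complex_of_real z - complex_of_real x)"
        proof -
          have "norm (complex_of_real z - complex_of_real x) = abs (z - x)" by (metis norm_of_real of_real_diff)
          then show ?thesis using z1 \<open>abs x \<le> R1\<close> by linarith
        qed
      qed
      show ?thesis unfolding eq using b1 b2 norm_triangle_ineq4 by (smt (verit))
    qed
    have lim: "((\<lambda>z. C' / z + Bg / (z - R1) * \<mu>) \<longlongrightarrow> 0) at_top"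
      by real_asymp
    have evt: "eventually (\<lambda>z. norm (mom h k) \<le> C' / z + Bg / (z - R1) * \<mu>) at_top"
      unfolding eventually_at_top_linorder using ev by blast
    have "norm (mom h k) \<le> 0"
      by (rule tendsto_le[OF _ lim tendsto_const evt]) simp
    then show ?thesis by simp
  qed
  fix \<nu> assume "\<nu> < r"
  then show "mom h \<nu> = 0"
  proof (induction \<nu> rule: less_induct)
    case (less x)
    show ?case by (rule step[OF less.prems]) (use less in auto)
  qed
qed

end

lemma poly_tend0:
  fixes p :: "complex poly"
  assumes "((\<lambda>z. poly p z) \<longlongrightarrow> 0) at_infinity"
  shows "p = 0"
proof (rule ccontr)
  assume "p \<noteq> 0"
  obtain a q where p: "p = pCons a q" by (cases p)
  show False
  proof (cases "q = 0")
    case True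
    then have "((\<lambda>z::complex. a) \<longlongrightarrow> 0) at_infinity" using assms p by simp
    then have "a = 0" using tendsto_const_iff[OF trivial_limit_at_infinity] by blast
    then show False using \<open>p \<noteq> 0\<close> p True by simp
  next
    case False
    obtain r where r: "\<And>z. r \<le> norm z \<Longrightarrow> 1 \<le> norm (poly (pCons a q) z)"
      using poly_infinity[OF False, of 1 a] by blast
    have "eventually (\<lambda>z. dist (poly p z) 0 < 1) at_infinity"
      using tendstoD[OF assms, of 1] by simp
    moreover have "eventually (\<lambda>z. 1 \<le> norm (poly p z)) at_infinity"
      unfolding eventually_at_infinity p using r by blast
    ultimately have "eventually (\<lambda>z. dist (poly p z) 0 < 1 \<and> 1 \<le> norm (poly p z)) at_infinity"
      by (rule eventually_conj)
    then obtain b where b: "\<And>z. b \<le> norm z \<Longrightarrow> dist (poly p z) 0 < 1 \<and> 1 \<le> norm (poly p z)"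
      unfolding eventually_at_infinity by blast
    have "b \<le> norm (complex_of_real \<bar>b\<bar>)" by simp
    from b[OF this] have d1: "dist (poly p (complex_of_real \<bar>b\<bar>)) 0 < 1"
      and d2: "1 \<le> norm (poly p (complex_of_real \<bar>b\<bar>))" by auto
    from d1 have "norm (poly p (complex_of_real \<bar>b\<bar>)) < 1" by simp
    with d2 show False by linarith
  qed
qed




lemma msupp_ae:
  assumes sM: "sets M = sets borel"
  shows "AE x in M. x \<in> msupp M"
proof -
  define I where "I = {(q,\<rho>). q \<in> \<rat> \<and> \<rho> \<in> \<rat> \<and> emeasure M (ball q \<rho>) = 0}"
  have "I \<subseteq> \<rat> \<times> \<rat>" unfolding I_def by auto
  then have cI: "countable I"
    using countable_SIGMA[OF countable_rat countable_rat] countable_subset by blast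
  define N where "N = (\<Union>p\<in>I. ball (fst p) (snd p))"
  have "N \<in> null_sets M"
    unfolding N_def
  proof (rule null_sets_UN'[OF cI])
    fix p assume "p \<in> I"
    then show "ball (fst p) (snd p) \<in> null_sets M"
      unfolding I_def using sM by (auto simp: null_sets_def)
  qed
  moreover have "{x \<in> space M. \<not> x \<in> msupp M} \<subseteq> N"
  proof
    fix x assume "x \<in> {x \<in> space M. \<not> x \<in> msupp M}"
    then obtain e where e: "e > 0" "emeasure M (ball x e) = 0"
      unfolding msupp_def by (auto simp: not_gr_zero)
    obtain q where q: "q \<in> \<rat>" "x - e/3 < q" "q < x + e/3"
      using Rats_dense_in_real[of "x - e/3" "x + e/3"] e by auto
    obtain \<rho> where \<rho>: "\<rho> \<in> \<rat>" "e/3 < \<rho>" "\<rho> < 2*e/3"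
      using Rats_dense_in_real[of "e/3" "2*e/3"] e by auto
    have sub: "ball q \<rho> \<subseteq> ball x e"
    proof
      fix y assume "y \<in> ball q \<rho>"
      then have "dist q y < \<rho>" by simp
      then show "y \<in> ball x e" using q \<rho> by (simp add: dist_real_def)
    qed
    have "ball q \<rho> \<in> sets M" "ball x e \<in> sets M" using sM by auto
    then have "emeasure M (ball q \<rho>) \<le> emeasure M (ball x e)"
      using sub by (intro emeasure_mono) auto
    then have "emeasure M (ball q \<rho>) = 0" using e by simp
    then have "(q, \<rho>) \<in> I" unfolding I_def using q \<rho> by auto
    moreover have "x \<in> ball q \<rho>" using q \<rho> by (simp add: dist_real_def)
    ultimately show "x \<in> N" unfolding N_def by force
  qed
  ultimately show ?thesis by (rule AE_I')
qed




declare shat.simps[simp del]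

lemma pc_pCons: "pc (pCons a p) z = complex_of_real a + z * pc p z"
  unfolding pc_def by (simp add: map_poly_pCons)
lemma pc_0[simp]: "pc 0 z = 0" unfolding pc_def by simp
lemma pc_add: "pc (p+q) z = pc p z + pc q z"
proof (induction p arbitrary: q)
  case 0 then show ?case by simp
next
  case (pCons a p)
  obtain b q' where "q = pCons b q'" by (cases q)
  then show ?case by (simp add: pc_pCons pCons.IH algebra_simps)
qed
lemma pc_smult: "pc (smult a p) z = complex_of_real a * pc p z"
  by (induction p) (auto simp: pc_pCons algebra_simps)
lemma pc_mult: "pc (p*q) z = pc p z * pc q z"
  by (induction p) (auto simp: pc_pCons pc_add pc_smult algebra_simps)
lemma pc_real: "pc p (complex_of_real x) = complex_of_real (poly p x)"
  unfolding pc_def by (induction p) (auto simp: map_poly_pCons)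

locale hp =
  fixes m n N :: nat
    and \<Delta> :: "nat \<Rightarrow> real set"
    and \<sigma> :: "nat \<Rightarrow> real measure" and c :: "nat \<Rightarrow> real"
    and v t :: "nat \<Rightarrow> real poly"
    and a :: "nat \<Rightarrow> real poly"
  assumes m: "m \<ge> 1"
    and intervals: "\<forall>j\<in>{1..m}. \<exists>\<alpha> \<beta>. \<alpha> \<le> \<beta> \<and> \<Delta> j = {\<alpha>..\<beta>}"
    and disj: "\<forall>j. 1 \<le> j \<and> j < m \<longrightarrow> \<Delta> j \<inter> \<Delta> (Suc j) = {}"
    and meas: "\<forall>j\<in>{1..m}. sets (\<sigma> j) = sets borel \<and> finite_measure (\<sigma> j)
                 \<and> (c j = 1 \<or> c j = -1) \<and> infinite (msupp (\<sigma> j))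
                 \<and> convex hull (msupp (\<sigma> j)) = \<Delta> j"
    and rat: "\<forall>k\<in>{1..m}. lead_coeff (t k) = 1 \<and> degree (v k) < degree (t k) \<and> coprime (v k) (t k)"
    and N: "N \<ge> degree (bigT t m)"
    and N_props: "\<forall>n'>N. \<forall>b. HP_sol \<sigma> c v t m n' b \<longrightarrow>
         degree (b m) = n'
         \<and> (\<forall>b'. HP_sol \<sigma> c v t m n' b' \<longrightarrow> (\<exists>\<kappa>. \<kappa> \<noteq> 0 \<and> (\<forall>j\<le>m. b' j = smult \<kappa> (b j))))
         \<and> HP_zero_props \<sigma> c v t m \<Delta> n' b"
    and n: "n > N"
    and a: "HP_sol \<sigma> c v t m n a"
begin

abbreviation "D \<equiv> degree (bigT t m)"
abbreviation "rr \<equiv> n - D"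
abbreviation "A \<equiv> HPA \<sigma> c v t m a"
abbreviation "Q \<equiv> HPQ \<sigma> c v t m \<Delta> a"

definition Rt :: "nat \<Rightarrow> real set" where "Rt j = {x \<in> \<Delta> j. A j (complex_of_real x) = 0}"

lemma rr_pos: "rr \<ge> 1" using N n by linarith

lemma zp: "HP_zero_props \<sigma> c v t m \<Delta> n a"
  using N_props[rule_format, OF n a] by (elim conjE)

lemma sm: assumes "j \<in> {1..m}" shows "smeas (\<sigma> j) (\<Delta> j)"
proof -
  have mj: "sets (\<sigma> j) = sets borel \<and> finite_measure (\<sigma> j) \<and> (c j = 1 \<or> c j = -1) \<and> infinite (msupp (\<sigma> j))
                 \<and> convex hull (msupp (\<sigma> j)) = \<Delta> j" using bspec[OF meas assms] .
  from mj have s1: "sets (\<sigma> j) = sets borel" by (elim conjE)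
  from mj have s2: "finite_measure (\<sigma> j)" by (elim conjE)
  from mj have s3: "convex hull (msupp (\<sigma> j)) = \<Delta> j" by (elim conjE)
  obtain \<alpha> \<beta> where "\<Delta> j = {\<alpha>..\<beta>}" using bspec[OF intervals assms] by blast
  then have cpt: "compact (\<Delta> j)" by simp
  have sub: "msupp (\<sigma> j) \<subseteq> \<Delta> j" using hull_subset[of "msupp (\<sigma> j)" convex] s3 by simp
  have ae: "AE x in \<sigma> j. x \<in> \<Delta> j"
    by (rule eventually_mono[OF msupp_ae[OF s1]]) (use sub in blast)
  show ?thesis by (rule smeas.intro[OF s1 s2 cpt ae])
qed

lemma cj: "j \<in> {1..m} \<Longrightarrow> c j = 1 \<or> c j = -1"
proof -
  assume "j \<in> {1..m}"
  from bspec[OF meas this] show ?thesis by (elim conjE)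
qed

lemma cpt: "j \<in> {1..m} \<Longrightarrow> compact (\<Delta> j)" using sm[THEN smeas.cpt] .

lemma disj': "1 \<le> j \<Longrightarrow> j < m \<Longrightarrow> \<Delta> j \<inter> \<Delta> (Suc j) = {}" using disj by blast

lemma A_m: "A m z = (-1)^m * pc (a m) z"
  using m unfolding HPA_def by simp

lemma Rt_props: assumes "1 \<le> j" "j \<le> m" shows "finite (Rt j)" "card (Rt j) = rr" "Rt j \<subseteq> \<Delta> j"
proof -
  show "Rt j \<subseteq> \<Delta> j" unfolding Rt_def by auto
  have "finite (Rt j) \<and> card (Rt j) = rr"
  proof (cases "j = m")
    case True
    have "Rt j = {x \<in> \<Delta> m. poly (a m) x = 0}"
      unfolding Rt_def True A_m pc_real by auto
    then show ?thesis using zp unfolding HP_zero_props_def Let_def by simp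
  next
    case False
    then have j: "1 \<le> j" "j \<le> m - 1" using assms by auto
    define Z where "Z = {z. z \<notin> complex_of_real ` \<Delta> (Suc j) \<and> A j z = 0}"
    have Z: "finite Z" "card Z = rr" "Z \<subseteq> complex_of_real ` \<Delta> j"
      using zp j unfolding HP_zero_props_def Let_def Z_def by auto
    have dj: "\<Delta> j \<inter> \<Delta> (Suc j) = {}" using disj' j by auto
    have "complex_of_real ` Rt j = Z"
    proof
      show "complex_of_real ` Rt j \<subseteq> Z"
        unfolding Rt_def Z_def using dj by (auto dest: injD[OF inj_of_real])
      show "Z \<subseteq> complex_of_real ` Rt j"
        using Z(3) unfolding Rt_def Z_def by auto
    qed
    then show ?thesis using Z by (metis card_image finite_imageD inj_of_real inj_on_subset subset_UNIV)
  qed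
  then show "finite (Rt j)" "card (Rt j) = rr" by auto
qed

definition qp :: "nat \<Rightarrow> complex poly" where
  "qp j = (if 1 \<le> j \<and> j \<le> m then (\<Prod>x\<in>Rt j. [:- complex_of_real x, 1:]) else 1)"

lemma Q_qp: "Q j z = poly (qp j) z"
  unfolding HPQ_def qp_def Rt_def by (simp add: poly_prod)

lemma qp_deg: "degree (qp j) \<le> rr"
proof (cases "1 \<le> j \<and> j \<le> m")
  case True
  have "qp j = (\<Prod>x\<in>Rt j. [:- complex_of_real x, 1:])" using True by (simp add: qp_def)
  then have "degree (qp j) \<le> (\<Sum>x\<in>Rt j. degree [:- complex_of_real x, 1:])"
    using True degree_prod_sum_le[OF Rt_props(1), of j "\<lambda>x. [:- complex_of_real x, 1:]"]
    by (simp add: o_def)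
  also have "\<dots> = card (Rt j)" by simp
  finally show ?thesis using Rt_props True by simp
qed (auto simp: qp_def)

lemma Q_zero: assumes "1 \<le> j" "j \<le> m" "Q j z = 0" shows "\<exists>x\<in>Rt j. z = complex_of_real x"
  using assms Rt_props[OF assms(1,2)] unfolding HPQ_def Rt_def by auto

lemma Q_nz_out: assumes "x \<notin> \<Delta> j" shows "Q j (complex_of_real x) \<noteq> 0"
proof
  assume q: "Q j (complex_of_real x) = 0"
  then have "1 \<le> j \<and> j \<le> m" unfolding HPQ_def by (auto split: if_splits)
  then obtain y where "y \<in> Rt j" "complex_of_real x = complex_of_real y" using Q_zero q by blast
  then show False using assms Rt_props \<open>1 \<le> j \<and> j \<le> m\<close> by auto
qed

lemma Q_zero_A: assumes "Q j (complex_of_real x) = 0" shows "A j (complex_of_real x) = 0"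
proof -
  have "1 \<le> j \<and> j \<le> m" using assms unfolding HPQ_def by (auto split: if_splits)
  then obtain y where "y \<in> Rt j" "complex_of_real x = complex_of_real y" using Q_zero assms by blast
  then show ?thesis unfolding Rt_def by auto
qed

definition G :: "nat \<Rightarrow> nat \<Rightarrow> real \<Rightarrow> complex" where
  "G i k x = (if i = k then 1 else shat \<sigma> c (Suc i) k (complex_of_real x))"

lemma shat_eq: "i \<le> k \<Longrightarrow> shat \<sigma> c i k z = complex_of_real (c i) * PhiG (\<sigma> i) (G i k) z"
proof -
  assume ik: "i \<le> k"
  show ?thesis
  proof (cases "i = k")
    case True
    have "shat \<sigma> c i k z = sint \<sigma> c i (\<lambda>x. 1 / (z - complex_of_real x))"
      using True by (subst shat.simps) simp
    then show ?thesis using True unfolding sint_def PhiG_def G_def by simp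
  next
    case False
    then have "i < k" using ik by simp
    then have "shat \<sigma> c i k z = sint \<sigma> c i (\<lambda>x. shat \<sigma> c (Suc i) k (complex_of_real x) / (z - complex_of_real x))"
      by (subst shat.simps) simp
    then show ?thesis using False unfolding sint_def PhiG_def G_def by simp
  qed
qed

lemma G_good_aux: "\<forall>i. 1 \<le> i \<and> i \<le> k \<and> k \<le> m \<and> k - i = l \<longrightarrow> good (\<Delta> i) (G i k)"
proof (induction l)
  case 0
  then show ?case by (auto simp: G_def good_const)
next
  case (Suc l)
  show ?case
  proof (intro allI impI)
    fix i assume i: "1 \<le> i \<and> i \<le> k \<and> k \<le> m \<and> k - i = Suc l"
    then have ik: "i < k" "Suc i \<le> k" by auto
    have "k - Suc i = l" using i by auto
    then have g: "good (\<Delta> (Suc i)) (G (Suc i) k)" using Suc.IH[rule_format, of "Suc i"] i ik by auto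
    interpret s: smeas "\<sigma> (Suc i)" "\<Delta> (Suc i)" using sm i by auto
    obtain B where gm: "G (Suc i) k \<in> borel_measurable borel" and B: "\<And>y. y \<in> \<Delta> (Suc i) \<Longrightarrow> norm (G (Suc i) k y) \<le> B"
      using g unfolding good_def by blast
    have eqG: "G i k = (\<lambda>x. complex_of_real (c (Suc i)) * PhiG (\<sigma> (Suc i)) (G (Suc i) k) (complex_of_real x))"
      using ik by (auto simp: G_def shat_eq)
    have ci: "compact (\<Delta> i)" using cpt i by auto
    have "closed (\<Delta> (Suc i))" using s.cpt compact_imp_closed by blast
    moreover have "\<Delta> i \<inter> \<Delta> (Suc i) = {}" using disj' i ik by auto
    ultimately obtain d where d: "d > 0" "\<And>x y. x \<in> \<Delta> i \<Longrightarrow> y \<in> \<Delta> (Suc i) \<Longrightarrow> d \<le> dist x y"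
      using separate_compact_closed[OF ci] by metis
    have "norm (G i k x) \<le> abs (c (Suc i)) * (B / d * measure (\<sigma> (Suc i)) (space (\<sigma> (Suc i))))"
      if x: "x \<in> \<Delta> i" for x
    proof -
      have "norm (PhiG (\<sigma> (Suc i)) (G (Suc i) k) (complex_of_real x)) \<le> B / d * measure (\<sigma> (Suc i)) (space (\<sigma> (Suc i)))"
      proof (rule s.Phi_bound[OF gm B d(1)])
        fix y assume "y \<in> \<Delta> (Suc i)"
        then have "d \<le> dist x y" using d x by auto
        then show "d \<le> norm (complex_of_real x - complex_of_real y)"
          by (metis dist_real_def norm_of_real of_real_diff real_norm_def)
      qed auto
      then have "abs (c (Suc i)) * norm (PhiG (\<sigma> (Suc i)) (G (Suc i) k) (complex_of_real x))
          \<le> abs (c (Suc i)) * (B / d * measure (\<sigma> (Suc i)) (space (\<sigma> (Suc i))))"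
        by (rule mult_left_mono) simp
      then show ?thesis unfolding eqG norm_mult by simp
    qed
    moreover have "G i k \<in> borel_measurable borel"
      unfolding eqG by (rule borel_measurable_times[OF borel_measurable_const s.Phi_meas[OF gm]])
    ultimately show "good (\<Delta> i) (G i k)" unfolding good_def by blast
  qed
qed

lemma G_good: "1 \<le> i \<Longrightarrow> i \<le> k \<Longrightarrow> k \<le> m \<Longrightarrow> good (\<Delta> i) (G i k)"
  using G_good_aux by blast

lemma A_succ: assumes "j < m"
  shows "A (Suc j) (complex_of_real x) = (\<Sum>k\<in>{Suc j..m}. (-1)^k * pc (a k) (complex_of_real x) * G (Suc j) k x)"
proof (cases "Suc j = m")
  case True
  then show ?thesis using A_m by (simp add: G_def)
next
  case False
  then have "Suc j < m" using assms by simp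
  then have "A (Suc j) (complex_of_real x) = (-1)^Suc j * pc (a (Suc j)) (complex_of_real x)
      + (\<Sum>k\<in>{Suc (Suc j)..m}. (-1)^k * pc (a k) (complex_of_real x) * shat \<sigma> c (Suc (Suc j)) k (complex_of_real x))"
    unfolding HPA_def by simp
  also have "(\<Sum>k\<in>{Suc (Suc j)..m}. (-1)^k * pc (a k) (complex_of_real x) * shat \<sigma> c (Suc (Suc j)) k (complex_of_real x))
     = (\<Sum>k\<in>{Suc (Suc j)..m}. (-1)^k * pc (a k) (complex_of_real x) * G (Suc j) k x)"
    by (intro sum.cong) (auto simp: G_def)
  also have "(-1)^Suc j * pc (a (Suc j)) (complex_of_real x) + \<dots> = (\<Sum>k\<in>{Suc j..m}. (-1)^k * pc (a k) (complex_of_real x) * G (Suc j) k x)"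
    using \<open>Suc j < m\<close> by (simp add: sum.atLeast_Suc_atMost G_def)
  finally show ?thesis .
qed

lemma A_rep: assumes "1 \<le> j" "j < m"
  shows "A j z = (-1)^j * pc (a j) z + (\<Sum>k\<in>{Suc j..m}. (-1)^k * pc (a k) z *
     (complex_of_real (c (Suc j)) * PhiG (\<sigma> (Suc j)) (G (Suc j) k) z))"
  using assms unfolding HPA_def by (auto intro!: sum.cong simp: shat_eq)

lemma A0_rep:
  shows "A 0 z = pc (a 0) z + (\<Sum>k\<in>{1..m}. (-1)^k * pc (a k) z *
     (complex_of_real (c 1) * PhiG (\<sigma> 1) (G 1 k) z + ratf (v k) (t k) z))"
  unfolding HPA_def by (auto intro!: sum.cong simp: shat_eq)

end



lemma poly_growth:
  fixes p :: "complex poly"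
  shows "\<exists>K\<ge>0. \<forall>z. 1 \<le> norm z \<longrightarrow> norm (poly p z) \<le> K * norm z ^ degree p"
proof (intro exI[of _ "\<Sum>i\<le>degree p. norm (coeff p i)"] conjI allI impI)
  show "0 \<le> (\<Sum>i\<le>degree p. norm (coeff p i))" by (simp add: sum_nonneg)
  fix z :: complex assume z: "1 \<le> norm z"
  have "norm (poly p z) = norm (\<Sum>i\<le>degree p. coeff p i * z ^ i)" by (simp add: poly_altdef)
  also have "\<dots> \<le> (\<Sum>i\<le>degree p. norm (coeff p i * z ^ i))" by (rule norm_sum)
  also have "\<dots> \<le> (\<Sum>i\<le>degree p. norm (coeff p i) * norm z ^ degree p)"
  proof (rule sum_mono)
    fix i assume "i \<in> {..degree p}"
    then have "norm z ^ i \<le> norm z ^ degree p" using z by (intro power_increasing) auto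
    then show "norm (coeff p i * z ^ i) \<le> norm (coeff p i) * norm z ^ degree p"
      by (simp add: norm_mult norm_power mult_left_mono)
  qed
  also have "\<dots> = (\<Sum>i\<le>degree p. norm (coeff p i)) * norm z ^ degree p" by (simp add: sum_distrib_right)
  finally show "norm (poly p z) \<le> (\<Sum>i\<le>degree p. norm (coeff p i)) * norm z ^ degree p" .
qed

lemma poly_ev_nz:
  fixes p :: "complex poly"
  assumes "p \<noteq> 0" shows "\<exists>b. \<forall>z. b \<le> norm z \<longrightarrow> poly p z \<noteq> 0"
proof -
  have "bounded {x. poly p x = 0}" using poly_roots_finite[OF assms] by (rule finite_imp_bounded)
  then obtain b where b: "\<forall>x\<in>{x. poly p x = 0}. norm x \<le> b" unfolding bounded_iff by blast
  show ?thesis by (intro exI[of _ "b + 1"]) (use b in force)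
qed

lemma prod_lower:
  fixes R :: "complex set"
  assumes "finite R" "\<And>x. x \<in> R \<Longrightarrow> norm x \<le> \<rho>" "2 * \<rho> \<le> norm z"
  shows "(norm z / 2) ^ card R \<le> norm (\<Prod>x\<in>R. (z - x))"
proof -
  have "(norm z / 2) ^ card R = (\<Prod>x\<in>R. norm z / 2)" by simp
  also have "\<dots> \<le> (\<Prod>x\<in>R. norm (z - x))"
  proof (rule prod_mono)
    fix x assume x: "x \<in> R"
    have "norm z - norm x \<le> norm (z - x)" by (rule norm_triangle_ineq2)
    then show "0 \<le> norm z / 2 \<and> norm z / 2 \<le> norm (z - x)"
      using assms(2)[OF x] assms(3) by auto
  qed
  also have "\<dots> = norm (\<Prod>x\<in>R. (z - x))" by (simp add: prod_norm)
  finally show ?thesis .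
qed

lemma prod_dvd_roots:
  fixes P :: "complex poly"
  assumes "finite R" "\<And>x. x \<in> R \<Longrightarrow> poly P (complex_of_real x) = 0"
  shows "(\<Prod>x\<in>R. [:- complex_of_real x, 1:]) dvd P"
  using assms
proof (induction R arbitrary: P rule: finite_induct)
  case empty then show ?case by simp
next
  case (insert y R)
  then obtain S where S: "P = (\<Prod>x\<in>R. [:- complex_of_real x, 1:]) * S" by (meson dvdE insertCI)
  have "poly (\<Prod>x\<in>R. [:- complex_of_real x, 1:]) (complex_of_real y) \<noteq> 0"
    using insert(1,2) by (auto simp: poly_prod prod_zero_iff)
  moreover have "poly P (complex_of_real y) = 0" using insert by auto
  ultimately have "poly S (complex_of_real y) = 0" unfolding S by simp
  then obtain S' where "S = [:- complex_of_real y, 1:] * S'" using poly_eq_0_iff_dvd by (metis dvdE)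
  then have "P = (\<Prod>x\<in>insert y R. [:- complex_of_real x, 1:]) * S'"
    using S by (simp only: prod.insert[OF insert(1,2)] mult_ac)
  then show ?case by (rule dvdI)
qed

context hp begin

lemma T_nz: "bigT t m \<noteq> 0"
proof -
  have "0 \<notin> t ` {1..m}"
  proof
    assume "0 \<in> t ` {1..m}"
    then obtain k where k: "k \<in> {1..m}" "t k = 0" by auto
    from bspec[OF rat k(1)] have "lead_coeff (t k) = 1" by (elim conjE)
    then show False using k(2) by simp
  qed
  then show ?thesis unfolding bigT_def by (simp add: Lcm_0_iff)
qed

lemma Q_prod: "1 \<le> j \<Longrightarrow> j \<le> m \<Longrightarrow> Q j z = (\<Prod>x\<in>complex_of_real ` Rt j. (z - x))"
  unfolding HPQ_def Rt_def by (simp add: prod.reindex inj_on_def)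

lemma Q_lower: assumes "1 \<le> j" "j \<le> m"
  shows "\<exists>R. \<forall>z. R \<le> norm z \<longrightarrow> (norm z / 2) ^ rr \<le> norm (Q j z)"
proof -
  have "bounded (Rt j)" using Rt_props[OF assms] cpt[of j] assms compact_imp_bounded bounded_subset by auto
  then obtain \<rho> where \<rho>: "\<forall>x\<in>Rt j. norm x \<le> \<rho>" unfolding bounded_iff by blast
  have c: "card (complex_of_real ` Rt j) = rr"
    using Rt_props[OF assms] by (simp add: card_image inj_on_def)
  show ?thesis
  proof (intro exI[of _ "2 * \<rho>"] allI impI)
    fix z :: complex assume z: "2 * \<rho> \<le> norm z"
    have b: "\<And>x. x \<in> complex_of_real ` Rt j \<Longrightarrow> norm x \<le> \<rho>" using \<rho> by auto
    have f: "finite (complex_of_real ` Rt j)" using Rt_props[OF assms] by simp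
    show "(norm z / 2) ^ rr \<le> norm (Q j z)"
      unfolding Q_prod[OF assms] using prod_lower[OF f b z] c by simp
  qed
qed

lemma A_bound: assumes "1 \<le> j" "j \<le> m - 1"
  shows "\<exists>C R. \<forall>z. R \<le> norm z \<longrightarrow> norm (A j z) \<le> C / norm z"
proof -
  have "A j \<in> O[at_infinity](\<lambda>z. 1 / z)" using a assms unfolding HP_sol_def by auto
  then obtain C where "eventually (\<lambda>z. norm (A j z) \<le> C * norm (1 / z)) at_infinity"
    by (elim landau_o.bigE) auto
  then obtain R where R: "\<forall>z. R \<le> norm z \<longrightarrow> norm (A j z) \<le> C * norm (1 / z)"
    unfolding eventually_at_infinity by blast
  have "\<forall>z. R \<le> norm z \<longrightarrow> norm (A j z) \<le> C / norm z"
    using R by (simp add: norm_divide)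
  then show ?thesis by blast
qed

lemma A0_bound: "\<exists>C R. C \<ge> 0 \<and> (\<forall>z. R \<le> norm z \<longrightarrow> norm (A 0 z) \<le> C / norm z ^ (n + 1))"
proof -
  have "A 0 \<in> O[at_infinity](\<lambda>z. 1 / z ^ (n + 1))" using a unfolding HP_sol_def by auto
  then obtain C where "C > 0" "eventually (\<lambda>z. norm (A 0 z) \<le> C * norm (1 / z ^ (n + 1))) at_infinity"
    by (elim landau_o.bigE) auto
  then obtain R where R: "\<forall>z. R \<le> norm z \<longrightarrow> norm (A 0 z) \<le> C * norm (1 / z ^ (n + 1))"
    unfolding eventually_at_infinity by blast
  have "\<forall>z. R \<le> norm z \<longrightarrow> norm (A 0 z) \<le> C / norm z ^ (n + 1)"
    using R by (simp add: norm_divide norm_power norm_mult)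
  then show ?thesis using \<open>C > 0\<close> by (intro exI[of _ C] exI[of _ R]) simp
qed

definition Mp :: "nat \<Rightarrow> real poly" where "Mp j = (if j = 0 then bigT t m else 1)"

lemma MA_bound: assumes "j < m"
  shows "\<exists>C R. R \<ge> 1 \<and> (\<forall>z. R \<le> norm z \<longrightarrow> norm (pc (Mp j) z * A j z / Q j z) \<le> C / norm z ^ Suc rr)"
proof (cases "j = 0")
  case True
  obtain C R where C: "C \<ge> 0" and CR: "\<And>z. R \<le> norm z \<Longrightarrow> norm (A 0 z) \<le> C / norm z ^ (n + 1)"
    using A0_bound by blast
  obtain K where K: "K \<ge> 0" "\<And>z. 1 \<le> norm z \<Longrightarrow> norm (poly (map_poly complex_of_real (bigT t m)) z)
      \<le> K * norm z ^ degree (map_poly complex_of_real (bigT t m))"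
    using poly_growth by blast
  have dg: "degree (map_poly complex_of_real (bigT t m)) = D" by (simp add: degree_map_poly)
  have nD: "n + 1 = D + Suc rr" using N n by linarith
  have "\<forall>z. max 1 R \<le> norm z \<longrightarrow> norm (pc (Mp j) z * A j z / Q j z) \<le> K * C / norm z ^ Suc rr"
  proof (intro allI impI)
    fix z :: complex assume z: "max 1 R \<le> norm z"
    have Q0: "Q 0 z = 1" unfolding HPQ_def by simp
    have "norm (pc (Mp j) z * A j z / Q j z) = norm (pc (bigT t m) z) * norm (A 0 z)"
      using True Q0 by (simp add: Mp_def norm_mult)
    also have "\<dots> \<le> (K * norm z ^ D) * (C / norm z ^ (n + 1))"
      using K(1) K(2)[of z] CR[of z] z unfolding pc_def dg
      by (intro mult_mono) auto
    also have "\<dots> = K * C * (norm z ^ D / norm z ^ (D + Suc rr))" unfolding nD by simp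
    also have "\<dots> = K * C / norm z ^ Suc rr"
      using z by (simp add: power_add)
    finally show "norm (pc (Mp j) z * A j z / Q j z) \<le> K * C / norm z ^ Suc rr" .
  qed
  then show ?thesis by (intro exI[of _ "K * C"] exI[of _ "max 1 R"]) simp
next
  case False
  then have j: "1 \<le> j" "j \<le> m - 1" "j \<le> m" using assms by auto
  obtain C R where CR: "\<And>z. R \<le> norm z \<Longrightarrow> norm (A j z) \<le> C / norm z" using A_bound[OF j(1,2)] by blast
  obtain R' where R': "\<And>z. R' \<le> norm z \<Longrightarrow> (norm z / 2) ^ rr \<le> norm (Q j z)" using Q_lower[OF j(1,3)] by blast
  have "\<forall>z. max 1 (max R R') \<le> norm z \<longrightarrow> norm (pc (Mp j) z * A j z / Q j z) \<le> max C 0 * 2 ^ rr / norm z ^ Suc rr"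
  proof (intro allI impI)
    fix z :: complex assume z: "max 1 (max R R') \<le> norm z"
    have zp: "norm z > 0" using z by auto
    have q: "(norm z / 2) ^ rr \<le> norm (Q j z)" using R' z by auto
    have qp: "(norm z / 2) ^ rr > 0" using zp by simp
    have "norm (pc (Mp j) z * A j z / Q j z) = norm (A j z) / norm (Q j z)"
      using False by (simp add: Mp_def pc_def norm_divide)
    also have "\<dots> \<le> (max C 0 / norm z) / (norm z / 2) ^ rr"
    proof (rule frac_le)
      show "0 \<le> max C 0 / norm z" by simp
      show "norm (A j z) \<le> max C 0 / norm z" using CR[of z] z
        by (smt (verit, best) divide_right_mono norm_ge_zero)
    qed (use q qp in auto)
    also have "\<dots> = max C 0 * 2 ^ rr / norm z ^ Suc rr"
      using zp by (simp add: field_simps power_divide)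
    finally show "norm (pc (Mp j) z * A j z / Q j z) \<le> max C 0 * 2 ^ rr / norm z ^ Suc rr" .
  qed
  then show ?thesis by (intro exI[of _ "max C 0 * 2 ^ rr"] exI[of _ "max 1 (max R R')"]) simp
qed

end



lemma pc_sum: "pc (sum f A) z = (\<Sum>i\<in>A. pc (f i) z)"
  by (induction A rule: infinite_finite_induct) (auto simp: pc_add)

lemma pc_1[simp]: "pc 1 z = 1" unfolding pc_def by simp

lemma pc_cont: "continuous_on X (\<lambda>x::real. pc p (complex_of_real x))"
  unfolding pc_def by (intro continuous_intros)

context hp begin

definition w :: "nat \<Rightarrow> real \<Rightarrow> complex" where
  "w j x = pc (Mp j) (complex_of_real x) * A (Suc j) (complex_of_real x) / Q j (complex_of_real x)"

lemma Q_nz_S: assumes "j < m" "x \<in> \<Delta> (Suc j)" shows "Q j (complex_of_real x) \<noteq> 0"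
proof (cases "j = 0")
  case True then show ?thesis unfolding HPQ_def by simp
next
  case False
  then have "\<Delta> j \<inter> \<Delta> (Suc j) = {}" using disj' assms by simp
  then show ?thesis using Q_nz_out assms by blast
qed

lemma Q_nz_S2: assumes "j < m" "x \<in> \<Delta> (Suc j)" shows "Q (Suc (Suc j)) (complex_of_real x) \<noteq> 0"
proof (cases "Suc (Suc j) \<le> m")
  case True
  then have "\<Delta> (Suc j) \<inter> \<Delta> (Suc (Suc j)) = {}" using disj' by simp
  then show ?thesis using Q_nz_out assms by blast
next
  case False then show ?thesis unfolding HPQ_def by simp
qed

lemma Q_cont: "continuous_on X (\<lambda>x::real. Q j (complex_of_real x))"
  unfolding Q_qp by (intro continuous_intros)

lemma Q_meas: "(\<lambda>x::real. Q j (complex_of_real x)) \<in> borel_measurable borel"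
  by (rule borel_measurable_continuous_onI[OF Q_cont])

lemma cpt_S: "j < m \<Longrightarrow> compact (\<Delta> (Suc j))" using cpt by simp

lemma A_good: assumes "j < m" shows "good (\<Delta> (Suc j)) (\<lambda>x. A (Suc j) (complex_of_real x))"
proof -
  have "good (\<Delta> (Suc j)) (\<lambda>x. \<Sum>k\<in>{Suc j..m}. (-1)^k * pc (a k) (complex_of_real x) * G (Suc j) k x)"
    using assms by (intro good_sum good_mult good_cmult good_pc cpt_S G_good) auto
  then show ?thesis using A_succ[OF assms] by simp
qed

lemma w_good: assumes "j < m" shows "good (\<Delta> (Suc j)) (w j)"
proof -
  have "good (\<Delta> (Suc j)) (\<lambda>x. pc (Mp j) (complex_of_real x) * A (Suc j) (complex_of_real x) * (1 / Q j (complex_of_real x)))"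
    using assms Q_nz_S
    by (intro good_mult good_pc cpt_S A_good good_inv Q_cont) auto
  then show ?thesis unfolding w_def by simp
qed

lemma decomp: assumes j: "j < m"
  shows "\<exists>P. \<forall>z. z \<notin> complex_of_real ` \<Delta> (Suc j) \<and> (j = 0 \<longrightarrow> pc (bigT t m) z \<noteq> 0) \<longrightarrow>
     pc (Mp j) z * A j z - Q j z * (complex_of_real (c (Suc j)) * PhiG (\<sigma> (Suc j)) (w j) z) = poly P z"
proof -
  interpret s: smeas "\<sigma> (Suc j)" "\<Delta> (Suc j)" using sm j by simp
  define K where "K = {Suc j..m}"
  define cc where "cc = complex_of_real (c (Suc j))"
  define uk where "uk k = map_poly complex_of_real (Mp j * a k)" for k
  have uk_eval: "poly (uk k) z = pc (Mp j) z * pc (a k) z" for k z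
    unfolding uk_def pc_def[symmetric] by (rule pc_mult)
  have gG: "good (\<Delta> (Suc j)) (G (Suc j) k)" if "k \<in> K" for k
    using that j unfolding K_def by (intro G_good) auto
  have "\<forall>k\<in>K. \<exists>U. \<forall>z. z \<notin> complex_of_real ` \<Delta> (Suc j) \<longrightarrow>
     poly (uk k) z * s.Phi (G (Suc j) k) z = s.Phi (\<lambda>x. poly (uk k) (complex_of_real x) * G (Suc j) k x) z + poly U z"
    using gG s.polypart by blast
  then obtain U where U: "\<And>k z. k \<in> K \<Longrightarrow> z \<notin> complex_of_real ` \<Delta> (Suc j) \<Longrightarrow>
     poly (uk k) z * s.Phi (G (Suc j) k) z = s.Phi (\<lambda>x. poly (uk k) (complex_of_real x) * G (Suc j) k x) z + poly (U k) z"
    by metis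
  obtain V where V: "\<And>z. z \<notin> complex_of_real ` \<Delta> (Suc j) \<Longrightarrow>
     poly (qp j) z * s.Phi (w j) z = s.Phi (\<lambda>x. poly (qp j) (complex_of_real x) * w j x) z + poly V z"
    using s.polypart[OF w_good[OF j], of "qp j"] by blast
  have gk: "good (\<Delta> (Suc j)) (\<lambda>x. poly (uk k) (complex_of_real x) * G (Suc j) k x)" if "k \<in> K" for k
    using gG[OF that] by (intro good_mult good_poly s.cpt)
  have pw: "poly (qp j) (complex_of_real x) * w j x =
      (\<Sum>k\<in>K. (-1)^k * (poly (uk k) (complex_of_real x) * G (Suc j) k x))" if x: "x \<in> \<Delta> (Suc j)" for x
  proof -
    have "poly (qp j) (complex_of_real x) \<noteq> 0" using Q_nz_S[OF j x] Q_qp by simp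
    then have "poly (qp j) (complex_of_real x) * w j x = pc (Mp j) (complex_of_real x) * A (Suc j) (complex_of_real x)"
      unfolding w_def Q_qp by simp
    also have "\<dots> = (\<Sum>k\<in>K. (-1)^k * (poly (uk k) (complex_of_real x) * G (Suc j) k x))"
      unfolding A_succ[OF j] K_def uk_eval by (simp add: sum_distrib_left mult_ac)
    finally show ?thesis .
  qed
  have Phq: "s.Phi (\<lambda>x. poly (qp j) (complex_of_real x) * w j x) z
      = (\<Sum>k\<in>K. (-1)^k * s.Phi (\<lambda>x. poly (uk k) (complex_of_real x) * G (Suc j) k x) z)"
    if z: "z \<notin> complex_of_real ` \<Delta> (Suc j)" for z
  proof -
    have m1: "(\<lambda>x. poly (qp j) (complex_of_real x) * w j x) \<in> borel_measurable borel"
      using good_mult[OF good_poly[OF s.cpt] w_good[OF j]] unfolding good_def by blast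
    have m2: "(\<lambda>x. \<Sum>k\<in>K. (-1)^k * (poly (uk k) (complex_of_real x) * G (Suc j) k x)) \<in> borel_measurable borel"
    proof -
      have "good (\<Delta> (Suc j)) (\<lambda>x. \<Sum>k\<in>K. (-1)^k * (poly (uk k) (complex_of_real x) * G (Suc j) k x))"
      proof (rule good_sum)
        fix k assume "k \<in> K"
        then show "good (\<Delta> (Suc j)) (\<lambda>x. (-1)^k * (poly (uk k) (complex_of_real x) * G (Suc j) k x))"
          by (intro good_cmult gk)
      qed (simp add: K_def)
      then show ?thesis unfolding good_def by blast
    qed
    have "s.Phi (\<lambda>x. poly (qp j) (complex_of_real x) * w j x) z
       = s.Phi (\<lambda>x. \<Sum>k\<in>K. (-1)^k * (poly (uk k) (complex_of_real x) * G (Suc j) k x)) z"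
      by (rule s.Phi_cong[OF m1 m2 pw])
    also have "\<dots> = (\<Sum>k\<in>K. s.Phi (\<lambda>x. (-1)^k * (poly (uk k) (complex_of_real x) * G (Suc j) k x)) z)"
      by (rule s.Phi_sum) (auto simp: K_def intro!: good_cmult gk z)
    also have "\<dots> = (\<Sum>k\<in>K. (-1)^k * s.Phi (\<lambda>x. poly (uk k) (complex_of_real x) * G (Suc j) k x) z)"
      by (simp add: s.Phi_cmult)
    finally show ?thesis .
  qed
  define E where "E = (if j = 0 then bigT t m * a 0 + (\<Sum>k\<in>{1..m}. smult ((-1)^k) (a k * (v k * (bigT t m div t k))))
      else smult ((-1)^j) (a j))"
  have EA: "pc (Mp j) z * A j z = pc E z + (\<Sum>k\<in>K. (-1)^k * cc * (poly (uk k) z * s.Phi (G (Suc j) k) z))"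
    if z: "j = 0 \<longrightarrow> pc (bigT t m) z \<noteq> 0" for z
  proof (cases "j = 0")
    case True
    have Tz: "pc (bigT t m) z \<noteq> 0" using z True by simp
    have rk: "pc (bigT t m) z * ratf (v k) (t k) z = pc (v k * (bigT t m div t k)) z" if k: "k \<in> {1..m}" for k
    proof -
      have "t k dvd bigT t m" unfolding bigT_def using k by (intro dvd_Lcm) auto
      then have "bigT t m = t k * (bigT t m div t k)" by simp
      then have Tf: "pc (bigT t m) z = pc (t k) z * pc (bigT t m div t k) z" by (metis pc_mult)
      then have "pc (t k) z \<noteq> 0" using Tz by auto
      then show ?thesis unfolding ratf_def Tf pc_mult by (simp add: field_simps)
    qed
    have "pc (Mp j) z * A j z = pc (bigT t m) z * pc (a 0) z
      + (\<Sum>k\<in>{1..m}. (-1)^k * pc (a k) z * (pc (bigT t m) z * ratf (v k) (t k) z))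
      + (\<Sum>k\<in>{1..m}. (-1)^k * cc * (pc (bigT t m) z * pc (a k) z * s.Phi (G 1 k) z))"
      unfolding A0_rep True Mp_def cc_def
      by (simp add: algebra_simps sum_distrib_left sum.distrib)
    also have "(\<Sum>k\<in>{1..m}. (-1)^k * pc (a k) z * (pc (bigT t m) z * ratf (v k) (t k) z))
       = (\<Sum>k\<in>{1..m}. (-1)^k * pc (a k) z * pc (v k * (bigT t m div t k)) z)"
      using rk by (intro sum.cong) auto
    also have "pc (bigT t m) z * pc (a 0) z + \<dots> = pc E z"
      unfolding E_def using True by (simp add: pc_add pc_sum pc_smult pc_mult mult_ac)
    also have "(\<Sum>k\<in>{1..m}. (-1)^k * cc * (pc (bigT t m) z * pc (a k) z * s.Phi (G 1 k) z))
       = (\<Sum>k\<in>K. (-1)^k * cc * (poly (uk k) z * s.Phi (G (Suc j) k) z))"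
      unfolding K_def uk_eval True Mp_def by simp
    finally show ?thesis .
  next
    case False
    then have j1: "1 \<le> j" by simp
    show ?thesis
      unfolding A_rep[OF j1 j] E_def K_def uk_eval Mp_def cc_def using False
      by (simp add: pc_smult algebra_simps sum_distrib_left)
  qed
  define P where "P = map_poly complex_of_real E + smult cc (\<Sum>k\<in>K. smult ((-1)^k) (U k)) - smult cc V"
  show ?thesis
  proof (intro exI[of _ P] allI impI, elim conjE)
    fix z assume z: "z \<notin> complex_of_real ` \<Delta> (Suc j)" and zT: "j = 0 \<longrightarrow> pc (bigT t m) z \<noteq> 0"
    have "pc (Mp j) z * A j z - Q j z * (cc * s.Phi (w j) z)
       = pc E z + (\<Sum>k\<in>K. (-1)^k * cc * (s.Phi (\<lambda>x. poly (uk k) (complex_of_real x) * G (Suc j) k x) z + poly (U k) z))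
         - cc * (poly (qp j) z * s.Phi (w j) z)"
      unfolding EA[OF zT] Q_qp using U[OF _ z] by (simp add: algebra_simps)
    also have "\<dots> = pc E z + (\<Sum>k\<in>K. (-1)^k * cc * (s.Phi (\<lambda>x. poly (uk k) (complex_of_real x) * G (Suc j) k x) z + poly (U k) z))
         - cc * ((\<Sum>k\<in>K. (-1)^k * s.Phi (\<lambda>x. poly (uk k) (complex_of_real x) * G (Suc j) k x) z) + poly V z)"
      unfolding V[OF z] Phq[OF z] ..
    also have "\<dots> = pc E z + cc * (\<Sum>k\<in>K. (-1)^k * poly (U k) z) - cc * poly V z"
      by (simp add: algebra_simps sum.distrib sum_distrib_left)
    also have "\<dots> = poly P z"
      unfolding P_def pc_def by (simp add: poly_sum)
    finally show "pc (Mp j) z * A j z - Q j z * (complex_of_real (c (Suc j)) * PhiG (\<sigma> (Suc j)) (w j) z) = poly P z"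
      unfolding cc_def .
  qed
qed

end



context hp begin

lemma Q_ev_nz: assumes "j \<le> m" shows "\<exists>R. \<forall>z. R \<le> norm z \<longrightarrow> Q j z \<noteq> 0"
proof (cases "j = 0")
  case True then show ?thesis unfolding HPQ_def by simp
next
  case False
  then obtain R where R: "\<And>z. R \<le> norm z \<Longrightarrow> (norm z / 2) ^ rr \<le> norm (Q j z)"
    using Q_lower[of j] assms by auto
  show ?thesis
  proof (intro exI[of _ "max R 1"] allI impI)
    fix z :: complex assume z: "max R 1 \<le> norm z"
    then have "0 < (norm z / 2) ^ rr" by (intro zero_less_power) auto
    also have "\<dots> \<le> norm (Q j z)" using R z by simp
    finally show "Q j z \<noteq> 0" by auto
  qed
qed

lemma T_ev_nz: "\<exists>R. \<forall>z. R \<le> norm z \<longrightarrow> pc (bigT t m) z \<noteq> 0"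
proof -
  have "map_poly complex_of_real (bigT t m) \<noteq> 0" using T_nz by (simp add: map_poly_eq_0_iff)
  then show ?thesis unfolding pc_def by (rule poly_ev_nz)
qed

lemma cc_norm: "j < m \<Longrightarrow> norm (complex_of_real (c (Suc j))) = 1"
  using cj[of "Suc j"] by auto

lemma thresholds: assumes j: "j < m"
  shows "\<exists>Rs Cb Kc. Cb \<ge> 0 \<and> (\<forall>z. Rs \<le> norm z \<longrightarrow>
      z \<notin> complex_of_real ` \<Delta> (Suc j) \<and> Q j z \<noteq> 0 \<and> pc (bigT t m) z \<noteq> 0
      \<and> norm (pc (Mp j) z * A j z / Q j z) \<le> Cb / norm z ^ Suc rr
      \<and> norm (PhiG (\<sigma> (Suc j)) (w j) z) \<le> Kc / (norm z - Rs + 1))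
      \<and> Rs \<ge> 1"
proof -
  interpret s: smeas "\<sigma> (Suc j)" "\<Delta> (Suc j)" using sm j by simp
  obtain Cb Rb where Rb: "Rb \<ge> 1" and Cb: "\<And>z. Rb \<le> norm z \<Longrightarrow> norm (pc (Mp j) z * A j z / Q j z) \<le> Cb / norm z ^ Suc rr"
    using MA_bound[OF j] by blast
  obtain RQ where RQ: "\<And>z. RQ \<le> norm z \<Longrightarrow> Q j z \<noteq> 0" using Q_ev_nz[of j] j by auto
  obtain RT where RT: "\<And>z. RT \<le> norm z \<Longrightarrow> pc (bigT t m) z \<noteq> 0" using T_ev_nz by blast
  obtain \<rho>0 where \<rho>0: "\<forall>x\<in>\<Delta> (Suc j). norm x \<le> \<rho>0"
    using compact_imp_bounded[OF s.cpt] unfolding bounded_iff by blast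
  define \<rho> where "\<rho> = max \<rho>0 0"
  have \<rho>: "\<And>x. x \<in> \<Delta> (Suc j) \<Longrightarrow> abs x \<le> \<rho>" "\<rho> \<ge> 0" using \<rho>0 unfolding \<rho>_def by force+
  obtain Bw0 where wm: "w j \<in> borel_measurable borel" and Bw0: "\<forall>x\<in>\<Delta> (Suc j). norm (w j x) \<le> Bw0"
    using w_good[OF j] unfolding good_def by blast
  define Bw where "Bw = max Bw0 0"
  have Bw: "\<And>x. x \<in> \<Delta> (Suc j) \<Longrightarrow> norm (w j x) \<le> Bw" using Bw0 unfolding Bw_def by force
  define Rs where "Rs = max Rb (max RQ (max RT (\<rho> + 1)))"
  define Cb' where "Cb' = max Cb 0"
  define \<mu> where "\<mu> = measure (\<sigma> (Suc j)) (space (\<sigma> (Suc j)))"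
  have "\<forall>z. Rs \<le> norm z \<longrightarrow>
      z \<notin> complex_of_real ` \<Delta> (Suc j) \<and> Q j z \<noteq> 0 \<and> pc (bigT t m) z \<noteq> 0
      \<and> norm (pc (Mp j) z * A j z / Q j z) \<le> Cb' / norm z ^ Suc rr
      \<and> norm (PhiG (\<sigma> (Suc j)) (w j) z) \<le> Bw * \<mu> * (Rs - \<rho>) / (norm z - Rs + 1)"
  proof (intro allI impI conjI)
    fix z :: complex assume z: "Rs \<le> norm z"
    then have zz: "Rb \<le> norm z" "RQ \<le> norm z" "RT \<le> norm z" "\<rho> + 1 \<le> norm z" unfolding Rs_def by auto
    have dx: "norm z - \<rho> \<le> norm (z - complex_of_real x)" if "x \<in> \<Delta> (Suc j)" for x
    proof -
      have "norm z - norm (complex_of_real x) \<le> norm (z - complex_of_real x)" by (rule norm_triangle_ineq2)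
      then show ?thesis using \<rho>(1)[OF that] by simp
    qed
    show "z \<notin> complex_of_real ` \<Delta> (Suc j)"
    proof
      assume "z \<in> complex_of_real ` \<Delta> (Suc j)"
      then obtain x where "x \<in> \<Delta> (Suc j)" "z = complex_of_real x" by blast
      then show False using dx[of x] zz(4) by simp
    qed
    show "Q j z \<noteq> 0" using RQ zz by blast
    show "pc (bigT t m) z \<noteq> 0" using RT zz by blast
    show "norm (pc (Mp j) z * A j z / Q j z) \<le> Cb' / norm z ^ Suc rr"
      using Cb[OF zz(1)] unfolding Cb'_def by (smt (verit, best) divide_right_mono zero_le_power norm_ge_zero)
    have "norm (PhiG (\<sigma> (Suc j)) (w j) z) \<le> Bw / (norm z - \<rho>) * \<mu>"
      unfolding \<mu>_def by (rule s.Phi_bound[OF wm Bw]) (use zz dx in auto)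
    also have "\<dots> \<le> Bw * \<mu> * (Rs - \<rho>) / (norm z - Rs + 1)"
    proof -
      have "Rs \<ge> \<rho> + 1" unfolding Rs_def by auto
      have "Bw \<ge> 0" "\<mu> \<ge> 0" unfolding Bw_def \<mu>_def by auto
      have a1: "norm z - \<rho> > 0" using zz by simp
      have a2: "norm z - Rs + 1 > 0" using z by simp
      have h: "0 \<le> (Rs - \<rho> - 1) * (norm z - \<rho> + 1)"
        using \<open>Rs \<ge> \<rho> + 1\<close> a1 by (intro mult_nonneg_nonneg) auto
      have h': "0 \<le> Rs * norm z - Rs * \<rho> + Rs - \<rho> * norm z + \<rho> * \<rho> - norm z - 1"
        using h by (simp add: algebra_simps)
      have "1 / (norm z - \<rho>) \<le> (Rs - \<rho>) / (norm z - Rs + 1)"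
        using a1 a2 h' by (simp add: field_simps)
      then have "Bw * \<mu> * (1 / (norm z - \<rho>)) \<le> Bw * \<mu> * ((Rs - \<rho>) / (norm z - Rs + 1))"
        using \<open>Bw \<ge> 0\<close> \<open>\<mu> \<ge> 0\<close> by (intro mult_left_mono) auto
      then show ?thesis by simp
    qed
    finally show "norm (PhiG (\<sigma> (Suc j)) (w j) z) \<le> Bw * \<mu> * (Rs - \<rho>) / (norm z - Rs + 1)" .
  qed
  moreover have "Rs \<ge> 1" unfolding Rs_def using Rb by auto
  moreover have "Cb' \<ge> 0" unfolding Cb'_def by simp
  ultimately show ?thesis by blast
qed

end



lemma lim_pow: "((\<lambda>y::real. C / y ^ Suc k) \<longlongrightarrow> 0) at_top"
proof (rule tendsto_divide_0[OF tendsto_const])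
  have "filterlim (\<lambda>y::real. y ^ Suc k) at_top at_top"
    by (rule filterlim_pow_at_top[OF _ filterlim_ident]) simp
  then show "filterlim (\<lambda>y::real. y ^ Suc k) at_infinity at_top"
    by (rule filterlim_at_top_imp_at_infinity)
qed

context hp begin

lemma rep: assumes j: "j < m" and z: "z \<notin> complex_of_real ` \<Delta> (Suc j)" "Q j z \<noteq> 0"
    "j = 0 \<longrightarrow> pc (bigT t m) z \<noteq> 0"
  shows "pc (Mp j) z * A j z / Q j z = complex_of_real (c (Suc j)) * PhiG (\<sigma> (Suc j)) (w j) z"
proof -
  obtain P where P: "\<And>z. z \<notin> complex_of_real ` \<Delta> (Suc j) \<Longrightarrow> (j = 0 \<longrightarrow> pc (bigT t m) z \<noteq> 0) \<Longrightarrow>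
     pc (Mp j) z * A j z - Q j z * (complex_of_real (c (Suc j)) * PhiG (\<sigma> (Suc j)) (w j) z) = poly P z"
    using decomp[OF j] by blast
  have dvd: "qp j dvd P"
  proof (cases "j = 0")
    case True then show ?thesis by (simp add: qp_def)
  next
    case False
    then have j1: "1 \<le> j" "j \<le> m" using j by auto
    have qpj: "qp j = (\<Prod>x\<in>Rt j. [:- complex_of_real x, 1:])" using j1 by (simp add: qp_def)
    show ?thesis unfolding qpj
    proof (rule prod_dvd_roots[OF Rt_props(1)[OF j1]])
      fix x assume x: "x \<in> Rt j"
      have xD: "x \<in> \<Delta> j" and Ax: "A j (complex_of_real x) = 0" using x unfolding Rt_def by auto
      have "Q j (complex_of_real x) = 0"
        unfolding Q_qp qpj poly_prod using x Rt_props(1)[OF j1] by (auto simp: prod_zero_iff)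
      moreover have "complex_of_real x \<notin> complex_of_real ` \<Delta> (Suc j)"
        using disj'[of j] j1 j xD by auto
      ultimately show "poly P (complex_of_real x) = 0"
        using P[of "complex_of_real x"] Ax False by simp
    qed
  qed
  then obtain Sp where Sp: "P = qp j * Sp" by (elim dvdE)
  have "Sp = 0"
  proof (rule poly_tend0)
    obtain Rs Cb Kc where th: "\<And>z. Rs \<le> norm z \<Longrightarrow>
      z \<notin> complex_of_real ` \<Delta> (Suc j) \<and> Q j z \<noteq> 0 \<and> pc (bigT t m) z \<noteq> 0
      \<and> norm (pc (Mp j) z * A j z / Q j z) \<le> Cb / norm z ^ Suc rr
      \<and> norm (PhiG (\<sigma> (Suc j)) (w j) z) \<le> Kc / (norm z - Rs + 1)"
      using thresholds[OF j] by blast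
    show "((\<lambda>z. poly Sp z) \<longlongrightarrow> 0) at_infinity"
    proof (rule Lim_null_comparison)
      show "eventually (\<lambda>z. norm (poly Sp z) \<le> Cb / norm z ^ Suc rr + Kc / (norm z - Rs + 1)) at_infinity"
        unfolding eventually_at_infinity
      proof (intro exI[of _ Rs] allI impI)
        fix z :: complex assume zR: "Rs \<le> norm z"
        note th' = th[OF zR]
        have Qz: "poly (qp j) z \<noteq> 0" using th' Q_qp by simp
        have "poly (qp j) z * poly Sp z = pc (Mp j) z * A j z - Q j z * (complex_of_real (c (Suc j)) * PhiG (\<sigma> (Suc j)) (w j) z)"
          using P[of z] th' Sp by simp
        then have "poly Sp z = pc (Mp j) z * A j z / Q j z - complex_of_real (c (Suc j)) * PhiG (\<sigma> (Suc j)) (w j) z"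
          using Qz unfolding Q_qp by (simp add: field_simps)
        then have "norm (poly Sp z) \<le> norm (pc (Mp j) z * A j z / Q j z) + norm (complex_of_real (c (Suc j)) * PhiG (\<sigma> (Suc j)) (w j) z)"
          by (simp add: norm_triangle_ineq4)
        also have "norm (complex_of_real (c (Suc j)) * PhiG (\<sigma> (Suc j)) (w j) z) = norm (PhiG (\<sigma> (Suc j)) (w j) z)"
          using cc_norm[OF j] by (simp add: norm_mult)
        finally show "norm (poly Sp z) \<le> Cb / norm z ^ Suc rr + Kc / (norm z - Rs + 1)" using th' by linarith
      qed
      have "((\<lambda>y::real. Kc / (y - Rs + 1)) \<longlongrightarrow> 0) at_top" by real_asymp
      from tendsto_add[OF lim_pow this]
      have "((\<lambda>y::real. Cb / y ^ Suc rr + Kc / (y - Rs + 1)) \<longlongrightarrow> 0) at_top" by simp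
      from filterlim_compose[OF this filterlim_norm_at_top]
      show "((\<lambda>z. Cb / norm z ^ Suc rr + Kc / (norm z - Rs + 1)) \<longlongrightarrow> 0) at_infinity" .
    qed
  qed
  then have "P = 0" using Sp by simp
  then have "pc (Mp j) z * A j z = Q j z * (complex_of_real (c (Suc j)) * PhiG (\<sigma> (Suc j)) (w j) z)"
    using P[OF z(1) z(3)] by simp
  then show ?thesis using z(2) by (simp add: field_simps)
qed

lemma moments: assumes j: "j < m" and nu: "\<nu> < rr"
  shows "momG (\<sigma> (Suc j)) (w j) \<nu> = 0"
proof -
  interpret s: smeas "\<sigma> (Suc j)" "\<Delta> (Suc j)" using sm j by simp
  obtain Rs Cb Kc where Rs1: "Rs \<ge> 1" and th: "\<And>z. Rs \<le> norm z \<Longrightarrow>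
      z \<notin> complex_of_real ` \<Delta> (Suc j) \<and> Q j z \<noteq> 0 \<and> pc (bigT t m) z \<noteq> 0
      \<and> norm (pc (Mp j) z * A j z / Q j z) \<le> Cb / norm z ^ Suc rr
      \<and> norm (PhiG (\<sigma> (Suc j)) (w j) z) \<le> Kc / (norm z - Rs + 1)"
    using thresholds[OF j] by blast
  have bd: "norm (s.Phi (w j) (complex_of_real z)) \<le> Cb / z ^ Suc rr" if z: "Rs \<le> z" for z :: real
  proof -
    have nz: "norm (complex_of_real z) = z" using z Rs1 by simp
    then have zR: "Rs \<le> norm (complex_of_real z)" using z by simp
    note th' = th[OF zR]
    have "norm (s.Phi (w j) (complex_of_real z)) = norm (complex_of_real (c (Suc j)) * s.Phi (w j) (complex_of_real z))"
      using cc_norm[OF j] by (simp add: norm_mult)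
    also have "\<dots> = norm (pc (Mp j) (complex_of_real z) * A j (complex_of_real z) / Q j (complex_of_real z))"
      using rep[OF j] th' by simp
    also have "\<dots> \<le> Cb / z ^ Suc rr" using th' nz by simp
    finally show ?thesis .
  qed
  show ?thesis by (rule s.mom_vanish[OF w_good[OF j] bd nu])
qed

end



context hp begin

abbreviation "H \<equiv> HPH \<sigma> c v t m \<Delta> a"

lemma pcT_meas: "(\<lambda>x::real. pc p (complex_of_real x)) \<in> borel_measurable borel"
  by (rule borel_measurable_continuous_onI[OF pc_cont])

lemma A_meas: "j < m \<Longrightarrow> (\<lambda>x. A (Suc j) (complex_of_real x)) \<in> borel_measurable borel"
  using A_good unfolding good_def by blast

lemma H_meas: assumes j: "j < m" shows "(\<lambda>x. H (Suc j) (complex_of_real x)) \<in> borel_measurable borel"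
proof (cases "j = 0")
  case True
  have "(\<lambda>x. Q (Suc (Suc j)) (complex_of_real x) * pc (bigT t m) (complex_of_real x) * A (Suc j) (complex_of_real x)
      / Q (Suc j) (complex_of_real x)) \<in> borel_measurable borel"
    by (intro borel_measurable_divide borel_measurable_times Q_meas pcT_meas A_meas j)
  then show ?thesis using True unfolding HPH_def by simp
next
  case False
  have "(\<lambda>x. Q (Suc (Suc j)) (complex_of_real x) * A (Suc j) (complex_of_real x)
      / Q (Suc j) (complex_of_real x)) \<in> borel_measurable borel"
    by (intro borel_measurable_divide borel_measurable_times Q_meas A_meas j)
  then show ?thesis using False unfolding HPH_def by simp
qed

lemma QH: assumes j: "j < m" and x: "x \<in> \<Delta> (Suc j)"
  shows "Q (Suc j) (complex_of_real x) * H (Suc j) (complex_of_real x)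
     = Q (Suc (Suc j)) (complex_of_real x) * (pc (Mp j) (complex_of_real x) * A (Suc j) (complex_of_real x))"
proof (cases "Q (Suc j) (complex_of_real x) = 0")
  case True
  then have "A (Suc j) (complex_of_real x) = 0" by (rule Q_zero_A)
  then show ?thesis using True by simp
next
  case False
  then show ?thesis unfolding HPH_def Mp_def by auto
qed

lemma integrand1: assumes j: "j < m" and x: "x \<in> \<Delta> (Suc j)"
  shows "complex_of_real x ^ \<nu> * Q (Suc j) (complex_of_real x) * H (Suc j) (complex_of_real x)
      / (Q j (complex_of_real x) * Q (j + 2) (complex_of_real x)) = complex_of_real x ^ \<nu> * w j x"
proof -
  have q2: "Q (Suc (Suc j)) (complex_of_real x) \<noteq> 0" by (rule Q_nz_S2[OF j x])
  have "complex_of_real x ^ \<nu> * Q (Suc j) (complex_of_real x) * H (Suc j) (complex_of_real x)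
      / (Q j (complex_of_real x) * Q (j + 2) (complex_of_real x))
     = complex_of_real x ^ \<nu> * (Q (Suc j) (complex_of_real x) * H (Suc j) (complex_of_real x))
      / (Q j (complex_of_real x) * Q (Suc (Suc j)) (complex_of_real x))" by (simp add: mult.assoc)
  also have "\<dots> = complex_of_real x ^ \<nu> * w j x"
    unfolding QH[OF j x] w_def using q2 by (simp add: field_simps)
  finally show ?thesis .
qed

lemma integrand2: assumes j: "j < m" and x: "x \<in> \<Delta> (Suc j)" and z: "z \<notin> complex_of_real ` \<Delta> (Suc j)"
  shows "Q (Suc j) (complex_of_real x) ^ 2 / (z - complex_of_real x) * H (Suc j) (complex_of_real x)
      / (Q j (complex_of_real x) * Q (j + 2) (complex_of_real x))
     = poly (qp (Suc j)) (complex_of_real x) * w j x / (z - complex_of_real x)"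
proof -
  have q2: "Q (Suc (Suc j)) (complex_of_real x) \<noteq> 0" by (rule Q_nz_S2[OF j x])
  have "Q (Suc j) (complex_of_real x) ^ 2 / (z - complex_of_real x) * H (Suc j) (complex_of_real x)
      / (Q j (complex_of_real x) * Q (j + 2) (complex_of_real x))
     = Q (Suc j) (complex_of_real x) * (Q (Suc j) (complex_of_real x) * H (Suc j) (complex_of_real x))
      / ((z - complex_of_real x) * (Q j (complex_of_real x) * Q (Suc (Suc j)) (complex_of_real x)))"
    by (simp add: power2_eq_square field_simps)
  also have "\<dots> = Q (Suc j) (complex_of_real x) * (Q (Suc (Suc j)) (complex_of_real x) * (pc (Mp j) (complex_of_real x) * A (Suc j) (complex_of_real x)))
      / ((z - complex_of_real x) * (Q j (complex_of_real x) * Q (Suc (Suc j)) (complex_of_real x)))"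
    unfolding QH[OF j x] ..
  also have "\<dots> = poly (qp (Suc j)) (complex_of_real x) * w j x / (z - complex_of_real x)"
  proof -
    have q0: "Q j (complex_of_real x) \<noteq> 0" by (rule Q_nz_S[OF j x])
    have zx: "z - complex_of_real x \<noteq> 0" using z x by auto
    show ?thesis unfolding w_def using q0 q2 zx by (simp add: field_simps Q_qp)
  qed
  finally show ?thesis .
qed

lemma claim1: assumes j: "j < m" and nu: "\<nu> < rr"
  shows "sint \<sigma> c (Suc j) (\<lambda>x. complex_of_real x ^ \<nu> * Q (Suc j) (complex_of_real x) * H (Suc j) (complex_of_real x)
      / (Q j (complex_of_real x) * Q (j + 2) (complex_of_real x))) = 0"
proof -
  interpret s: smeas "\<sigma> (Suc j)" "\<Delta> (Suc j)" using sm j by simp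
  have "integral\<^sup>L (\<sigma> (Suc j)) (\<lambda>x. complex_of_real x ^ \<nu> * Q (Suc j) (complex_of_real x) * H (Suc j) (complex_of_real x)
      / (Q j (complex_of_real x) * Q (j + 2) (complex_of_real x)))
     = integral\<^sup>L (\<sigma> (Suc j)) (\<lambda>x. complex_of_real x ^ \<nu> * w j x)"
  proof (rule s.int_cong)
    show "(\<lambda>x. complex_of_real x ^ \<nu> * Q (Suc j) (complex_of_real x) * H (Suc j) (complex_of_real x)
      / (Q j (complex_of_real x) * Q (j + 2) (complex_of_real x))) \<in> borel_measurable borel"
      by (intro borel_measurable_divide borel_measurable_times Q_meas H_meas j borel_measurable_power
          borel_measurable_continuous_onI continuous_intros)
    show "(\<lambda>x. complex_of_real x ^ \<nu> * w j x) \<in> borel_measurable borel"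
      using s.good_xpow[OF w_good[OF j]] unfolding good_def by blast
  qed (rule integrand1[OF j])
  also have "\<dots> = 0" using moments[OF j nu] unfolding momG_def .
  finally show ?thesis unfolding sint_def by simp
qed

lemma core2: assumes j: "j < m" and z: "z \<notin> complex_of_real ` \<Delta> (Suc j)" "Q j z \<noteq> 0"
    "j = 0 \<longrightarrow> pc (bigT t m) z \<noteq> 0"
  shows "Q (Suc j) z * (pc (Mp j) z * A j z / Q j z) =
    sint \<sigma> c (Suc j) (\<lambda>x. Q (Suc j) (complex_of_real x) ^ 2 / (z - complex_of_real x) * H (Suc j) (complex_of_real x)
      / (Q j (complex_of_real x) * Q (j + 2) (complex_of_real x)))"
proof -
  interpret s: smeas "\<sigma> (Suc j)" "\<Delta> (Suc j)" using sm j by simp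
  have gw: "good (\<Delta> (Suc j)) (\<lambda>x. poly (qp (Suc j)) (complex_of_real x) * w j x)"
    by (intro good_mult good_poly s.cpt w_good j)
  have "integral\<^sup>L (\<sigma> (Suc j)) (\<lambda>x. Q (Suc j) (complex_of_real x) ^ 2 / (z - complex_of_real x) * H (Suc j) (complex_of_real x)
      / (Q j (complex_of_real x) * Q (j + 2) (complex_of_real x)))
     = integral\<^sup>L (\<sigma> (Suc j)) (\<lambda>x. poly (qp (Suc j)) (complex_of_real x) * w j x / (z - complex_of_real x))"
  proof (rule s.int_cong)
    show "(\<lambda>x. Q (Suc j) (complex_of_real x) ^ 2 / (z - complex_of_real x) * H (Suc j) (complex_of_real x)
      / (Q j (complex_of_real x) * Q (j + 2) (complex_of_real x))) \<in> borel_measurable borel"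
      by (intro borel_measurable_divide borel_measurable_times Q_meas H_meas j borel_measurable_power
          borel_measurable_continuous_onI continuous_intros)
    show "(\<lambda>x. poly (qp (Suc j)) (complex_of_real x) * w j x / (z - complex_of_real x)) \<in> borel_measurable borel"
      using s.good_div[OF gw z(1)] unfolding good_def by blast
  qed (rule integrand2[OF j _ z(1)])
  then have rhs: "sint \<sigma> c (Suc j) (\<lambda>x. Q (Suc j) (complex_of_real x) ^ 2 / (z - complex_of_real x) * H (Suc j) (complex_of_real x)
      / (Q j (complex_of_real x) * Q (j + 2) (complex_of_real x)))
     = complex_of_real (c (Suc j)) * PhiG (\<sigma> (Suc j)) (\<lambda>x. poly (qp (Suc j)) (complex_of_real x) * w j x) z"
    unfolding sint_def PhiG_def by simp
  have "Q (Suc j) z * (pc (Mp j) z * A j z / Q j z) = Q (Suc j) z * (complex_of_real (c (Suc j)) * PhiG (\<sigma> (Suc j)) (w j) z)"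
    by (simp only: rep[OF j z])
  also have "\<dots> = poly (qp (Suc j)) z * (complex_of_real (c (Suc j)) * PhiG (\<sigma> (Suc j)) (w j) z)"
    by (simp only: Q_qp)
  also have "\<dots> = complex_of_real (c (Suc j)) * (poly (qp (Suc j)) z * s.Phi (w j) z)" by simp
  also have "poly (qp (Suc j)) z * s.Phi (w j) z = s.Phi (\<lambda>x. poly (qp (Suc j)) (complex_of_real x) * w j x) z"
    by (rule s.orth_mult[OF w_good[OF j] z(1) moments[OF j] qp_deg])
  finally show ?thesis unfolding rhs .
qed

lemma claim2: assumes j: "j < m" "j \<noteq> 1" and z: "z \<notin> complex_of_real ` \<Delta> (Suc j)" "Q j z \<noteq> 0"
    "j = 0 \<longrightarrow> pc (bigT t m) z \<noteq> 0"
  shows "H j z = sint \<sigma> c (Suc j) (\<lambda>x. Q (Suc j) (complex_of_real x) ^ 2 / (z - complex_of_real x) * H (Suc j) (complex_of_real x)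
      / (Q j (complex_of_real x) * Q (j + 2) (complex_of_real x)))"
proof -
  have "H j z = Q (Suc j) z * (pc (Mp j) z * A j z / Q j z)"
    using j unfolding HPH_def Mp_def by auto
  then show ?thesis using core2[OF j(1) z] by simp
qed

lemma claim3: assumes m2: "m \<ge> 2" and z: "z \<notin> complex_of_real ` \<Delta> 2" "Q 1 z \<noteq> 0"
  shows "H 1 z = pc (bigT t m) z * sint \<sigma> c 2 (\<lambda>x. Q 2 (complex_of_real x) ^ 2 / (z - complex_of_real x) * H 2 (complex_of_real x)
      / (Q 1 (complex_of_real x) * Q 3 (complex_of_real x)))"
proof -
  have j: "1 < m" using m2 by simp
  have "H 1 z = pc (bigT t m) z * (Q (Suc 1) z * (pc (Mp 1) z * A 1 z / Q 1 z))"
    unfolding HPH_def Mp_def by simp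
  also have "Q (Suc 1) z * (pc (Mp 1) z * A 1 z / Q 1 z) =
    sint \<sigma> c (Suc 1) (\<lambda>x. Q (Suc 1) (complex_of_real x) ^ 2 / (z - complex_of_real x) * H (Suc 1) (complex_of_real x)
      / (Q 1 (complex_of_real x) * Q (1 + 2) (complex_of_real x)))"
    by (rule core2[OF j]) (use z in \<open>auto simp: numeral_2_eq_2\<close>)
  finally show ?thesis by (simp add: numeral_2_eq_2 numeral_3_eq_3)
qed

end


theorem lemma2p2:
  fixes m n N :: nat
    and \<Delta> :: "nat \<Rightarrow> real set"
    and \<sigma> :: "nat \<Rightarrow> real measure" and c :: "nat \<Rightarrow> real"
    and v t :: "nat \<Rightarrow> real poly"
    and a :: "nat \<Rightarrow> real poly"
  assumes m: "m \<ge> 1"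
    and intervals: "\<forall>j\<in>{1..m}. \<exists>\<alpha> \<beta>. \<alpha> \<le> \<beta> \<and> \<Delta> j = {\<alpha>..\<beta>}"
    and disj: "\<forall>j. 1 \<le> j \<and> j < m \<longrightarrow> \<Delta> j \<inter> \<Delta> (Suc j) = {}"
    and meas: "\<forall>j\<in>{1..m}. sets (\<sigma> j) = sets borel \<and> finite_measure (\<sigma> j)
                 \<and> (c j = 1 \<or> c j = -1) \<and> infinite (msupp (\<sigma> j))
                 \<and> convex hull (msupp (\<sigma> j)) = \<Delta> j"
    and rat: "\<forall>k\<in>{1..m}. lead_coeff (t k) = 1 \<and> degree (v k) < degree (t k) \<and> coprime (v k) (t k)"
    and T_zeros: "\<forall>z. pc (bigT t m) z = 0 \<longrightarrow> z \<notin> complex_of_real ` (\<Delta> 1 \<union> \<Delta> m)"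
    and f_poles: "finite {p. p \<notin> complex_of_real ` \<Delta> m \<and> is_pole (ffun \<sigma> c v t m) p}
      \<and> (\<Sum>p\<in>{p. p \<notin> complex_of_real ` \<Delta> m \<and> is_pole (ffun \<sigma> c v t m) p}.
            nat (- zorder (ffun \<sigma> c v t m) p)) = degree (bigT t m)"
    and N: "N \<ge> degree (bigT t m)"
    and N_props: "\<forall>n'>N. \<forall>b. HP_sol \<sigma> c v t m n' b \<longrightarrow>
         degree (b m) = n'
         \<and> (\<forall>b'. HP_sol \<sigma> c v t m n' b' \<longrightarrow> (\<exists>\<kappa>. \<kappa> \<noteq> 0 \<and> (\<forall>j\<le>m. b' j = smult \<kappa> (b j))))
         \<and> HP_zero_props \<sigma> c v t m \<Delta> n' b"
    and n: "n > N"
    and a: "HP_sol \<sigma> c v t m n a" and a_monic: "lead_coeff (a m) = 1"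
  shows "(\<forall>j<m. \<forall>\<nu><n - degree (bigT t m).
            sint \<sigma> c (Suc j) (\<lambda>x. complex_of_real x ^ \<nu> * HPQ \<sigma> c v t m \<Delta> a (Suc j) (complex_of_real x)
               * HPH \<sigma> c v t m \<Delta> a (Suc j) (complex_of_real x)
               / (HPQ \<sigma> c v t m \<Delta> a j (complex_of_real x) * HPQ \<sigma> c v t m \<Delta> a (j + 2) (complex_of_real x))) = 0)
    \<and> (\<forall>j<m. j \<noteq> 1 \<longrightarrow> (\<forall>z. z \<notin> complex_of_real ` \<Delta> (Suc j) \<and> HPQ \<sigma> c v t m \<Delta> a j z \<noteq> 0
              \<and> (j = 0 \<longrightarrow> pc (bigT t m) z \<noteq> 0) \<longrightarrow>
            HPH \<sigma> c v t m \<Delta> a j z =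
            sint \<sigma> c (Suc j) (\<lambda>x. HPQ \<sigma> c v t m \<Delta> a (Suc j) (complex_of_real x) ^ 2 / (z - complex_of_real x)
               * HPH \<sigma> c v t m \<Delta> a (Suc j) (complex_of_real x)
               / (HPQ \<sigma> c v t m \<Delta> a j (complex_of_real x) * HPQ \<sigma> c v t m \<Delta> a (j + 2) (complex_of_real x)))))
    \<and> (m \<ge> 2 \<longrightarrow> (\<forall>z. z \<notin> complex_of_real ` \<Delta> 2 \<and> HPQ \<sigma> c v t m \<Delta> a 1 z \<noteq> 0 \<longrightarrow>
            HPH \<sigma> c v t m \<Delta> a 1 z = pc (bigT t m) z *
            sint \<sigma> c 2 (\<lambda>x. HPQ \<sigma> c v t m \<Delta> a 2 (complex_of_real x) ^ 2 / (z - complex_of_real x)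
               * HPH \<sigma> c v t m \<Delta> a 2 (complex_of_real x)
               / (HPQ \<sigma> c v t m \<Delta> a 1 (complex_of_real x) * HPQ \<sigma> c v t m \<Delta> a 3 (complex_of_real x)))))"
proof -
  interpret hp m n N \<Delta> \<sigma> c v t a
    by (rule hp.intro[OF m intervals disj meas rat N N_props n a])
  show ?thesis
  proof (intro conjI allI impI)
    fix j \<nu> assume "j < m" "\<nu> < n - degree (bigT t m)"
    then show "sint \<sigma> c (Suc j) (\<lambda>x. complex_of_real x ^ \<nu> * HPQ \<sigma> c v t m \<Delta> a (Suc j) (complex_of_real x)
               * HPH \<sigma> c v t m \<Delta> a (Suc j) (complex_of_real x)
               / (HPQ \<sigma> c v t m \<Delta> a j (complex_of_real x) * HPQ \<sigma> c v t m \<Delta> a (j + 2) (complex_of_real x))) = 0"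
      by (rule claim1)
  next
    fix j z assume "j < m" "j \<noteq> 1" "z \<notin> complex_of_real ` \<Delta> (Suc j) \<and> HPQ \<sigma> c v t m \<Delta> a j z \<noteq> 0
              \<and> (j = 0 \<longrightarrow> pc (bigT t m) z \<noteq> 0)"
    then show "HPH \<sigma> c v t m \<Delta> a j z =
            sint \<sigma> c (Suc j) (\<lambda>x. HPQ \<sigma> c v t m \<Delta> a (Suc j) (complex_of_real x) ^ 2 / (z - complex_of_real x)
               * HPH \<sigma> c v t m \<Delta> a (Suc j) (complex_of_real x)
               / (HPQ \<sigma> c v t m \<Delta> a j (complex_of_real x) * HPQ \<sigma> c v t m \<Delta> a (j + 2) (complex_of_real x)))"
      using claim2 by blast
  next
    fix z assume "m \<ge> 2" "z \<notin> complex_of_real ` \<Delta> 2 \<and> HPQ \<sigma> c v t m \<Delta> a 1 z \<noteq> 0"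
    then show "HPH \<sigma> c v t m \<Delta> a 1 z = pc (bigT t m) z *
            sint \<sigma> c 2 (\<lambda>x. HPQ \<sigma> c v t m \<Delta> a 2 (complex_of_real x) ^ 2 / (z - complex_of_real x)
               * HPH \<sigma> c v t m \<Delta> a 2 (complex_of_real x)
               / (HPQ \<sigma> c v t m \<Delta> a 1 (complex_of_real x) * HPQ \<sigma> c v t m \<Delta> a 3 (complex_of_real x)))"
      using claim3 by blast
  qed
qed

end
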